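(* Let $v_1,\dots,v_{d+1}$ be the vertices of a $d$-simplex in general position. With $s_0=1$ and $z(\sigma,0)=1$, for every $0\le\ell\le d$, $$\sum_{\sigma\in\mathfrak S_d}\operatorname{sign}(\sigma)g_d(z(\sigma,1),\dots,z(\sigma,d))=\frac{1}{(d-\ell)!}\sum_{\sigma\in\mathfrak S_d}\operatorname{sign}(\sigma)\sum_{s_1=1}^{\frac{z(\sigma,1)}{z(\sigma,0)}s_0}\cdots\sum_{s_\ell=1}^{\frac{z(\sigma,\ell)}{z(\sigma,\ell-1)}s_{\ell-1}}\frac{\prod_{j=\ell+1}^dz(\sigma,j)}{z(\sigma,\ell)^{d-\ell}}\,s_\ell^{\,d-\ell},$$ with extended sums. In particular ($\ell=0$): $\sum_{\sigma}\operatorname{sign}(\sigma)g_d(z(\sigma,1),\dots,z(\sigma,d))=\frac1{d!}\sum_\sigma\operatorname{sign}(\sigma)\prod_{j=1}^dz(\sigma,j)$.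
   Context: Write $v_i=(x_{i,1},\dots,x_{i,d})$. $\pi^{(j)}$ forgets the last $j$ coordinates; general position means that for every $0\le k\le d-1$ and every $(k+1)$-subset $U$ of the vertices, $\pi^{(d-k)}(\mathrm{conv}(U))$ is a $k$-simplex. $X(\sigma,k)$ ($1\le k\le d$) is the $(k+1)\times(k+1)$ matrix with rows $(1,x_{\sigma(r),1},\dots,x_{\sigma(r),k})$, $r=1,\dots,k$, and last row $(1,x_{d+1,1},\dots,x_{d+1,k})$; $Y(\sigma,k)$ the $k\times k$ matrix with rows $(1,x_{\sigma(r),1},\dots,x_{\sigma(r),k-1})$; $z(\sigma,k)=\det X(\sigma,k)/\det Y(\sigma,k)$. $P_k(x)=(B_{k+1}(x+1)-B_{k+1})/(k+1)$ with $B_k(x)$ the Bernoulli polynomials; extended sum $\sum_{s=1}^u\sum_kh_ks^k:=h_0u+\sum_{k\ge1}h_kP_k(u)$. $f_d(a_1,\dots,a_d)=\sum_{s_1=1}^{a_1}\sum_{s_2=1}^{a_2s_1}\cdots\sum_{s_d=1}^{a_ds_{d-1}}1$ (extended sums, innermost first), $g_d(b_1,\dots,b_d)=f_d(b_1,b_2/b_1,\dots,b_d/b_{d-1})$. *)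

theory Defs
  imports "Jordan_Normal_Form.Determinant" "HOL-Computational_Algebra.Polynomial"
          "HOL-Combinatorics.Permutations"
begin

text \<open>A point of R^m is represented as a function nat => real whose coordinates
  are indexed 1..m (all other values are 0).  Vertex i of the configuration has
  coordinates x i 1, ..., x i d.\<close>

definition vertex :: "nat \<Rightarrow> (nat \<Rightarrow> nat \<Rightarrow> real) \<Rightarrow> nat \<Rightarrow> (nat \<Rightarrow> real)" where
  "vertex d x i = (\<lambda>j. if j \<in> {1..d} then x i j else 0)"

definition proj_first :: "nat \<Rightarrow> (nat \<Rightarrow> real) \<Rightarrow> (nat \<Rightarrow> real)" where
  "proj_first k p = (\<lambda>j. if j \<in> {1..k} then p j else 0)"

definition conv_hull :: "(nat \<Rightarrow> real) set \<Rightarrow> (nat \<Rightarrow> real) set" where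
  "conv_hull S = {q. \<exists>F c. finite F \<and> F \<subseteq> S \<and> (\<forall>p\<in>F. 0 \<le> c p) \<and> sum c F = 1 \<and>
                       q = (\<lambda>j. \<Sum>p\<in>F. c p * p j)}"

definition aff_independent :: "(nat \<Rightarrow> real) set \<Rightarrow> bool" where
  "aff_independent C \<longleftrightarrow> (\<forall>c. sum c C = 0 \<and> (\<forall>j. (\<Sum>p\<in>C. c p * p j) = 0) \<longrightarrow> (\<forall>p\<in>C. c p = 0))"

definition is_simplex :: "nat \<Rightarrow> (nat \<Rightarrow> real) set \<Rightarrow> bool" where
  "is_simplex k T \<longleftrightarrow> (\<exists>C. finite C \<and> card C = k + 1 \<and> aff_independent C \<and> T = conv_hull C)"

definition general_position :: "nat \<Rightarrow> (nat \<Rightarrow> nat \<Rightarrow> real) \<Rightarrow> bool" where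
  "general_position d x \<longleftrightarrow>
     (\<forall>k U. k \<le> d - 1 \<and> k < d \<and> U \<subseteq> {1..d+1} \<and> card U = k + 1 \<longrightarrow>
        is_simplex k (proj_first k ` conv_hull (vertex d x ` U)))"

definition Xmat :: "nat \<Rightarrow> (nat \<Rightarrow> nat \<Rightarrow> real) \<Rightarrow> (nat \<Rightarrow> nat) \<Rightarrow> nat \<Rightarrow> real mat" where
  "Xmat d x \<sigma> k = mat (k+1) (k+1) (\<lambda>(r, c).
      let i = (if r < k then \<sigma> (r+1) else d + 1) in if c = 0 then 1 else x i c)"

definition Ymat :: "(nat \<Rightarrow> nat \<Rightarrow> real) \<Rightarrow> (nat \<Rightarrow> nat) \<Rightarrow> nat \<Rightarrow> real mat" where
  "Ymat x \<sigma> k = mat k k (\<lambda>(r, c). if c = 0 then 1 else x (\<sigma> (r+1)) c)"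

definition zval :: "nat \<Rightarrow> (nat \<Rightarrow> nat \<Rightarrow> real) \<Rightarrow> (nat \<Rightarrow> nat) \<Rightarrow> nat \<Rightarrow> real" where
  "zval d x \<sigma> k = (if k = 0 then 1 else det (Xmat d x \<sigma> k) / det (Ymat x \<sigma> k))"

fun bernoulli_num :: "nat \<Rightarrow> real" where
  "bernoulli_num n = (if n = 0 then 1 else
      - (\<Sum>i<n. of_nat (Suc n choose i) * bernoulli_num i) / of_nat (Suc n))"

definition bernoulli_poly :: "nat \<Rightarrow> real poly" where
  "bernoulli_poly n = (\<Sum>i\<le>n. monom (of_nat (n choose i) * bernoulli_num i) (n - i))"

definition Ppoly :: "nat \<Rightarrow> real poly" where
  "Ppoly k = smult (1 / of_nat (k + 1))
      (pcompose (bernoulli_poly (k + 1)) [:1, 1:] - [:bernoulli_num (k + 1):])"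

definition ext_sum :: "real poly \<Rightarrow> real poly" where
  "ext_sum h = smult (coeff h 0) [:0, 1:] + (\<Sum>k\<in>{1..degree h}. smult (coeff h k) (Ppoly k))"

text \<open>nested_sum [a_1,...,a_m] h: the polynomial in s_0 given by
  sum_{s_1=1}^{a_1 s_0} ... sum_{s_m=1}^{a_m s_{m-1}} h(s_m) (extended sums, innermost first).\<close>
fun nested_sum :: "real list \<Rightarrow> real poly \<Rightarrow> real poly" where
  "nested_sum [] h = h"
| "nested_sum (a # as) h = pcompose (ext_sum (nested_sum as h)) [:0, a:]"

definition f_fun :: "real list \<Rightarrow> real" where
  "f_fun as = poly (nested_sum as 1) 1"

definition g_fun :: "real list \<Rightarrow> real" where
  "g_fun bs = f_fun (map2 (/) bs (1 # bs))"

end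

theory Submission
  imports Defs
begin


lemma ext_sum_bound:
  assumes "degree h \<le> N"
  shows "ext_sum h = smult (coeff h 0) [:0, 1:] + (\<Sum>k\<in>{1..N}. smult (coeff h k) (Ppoly k))"
proof -
  have "{1..N} = {1..degree h} \<union> {degree h + 1..N}" using assms by auto
  moreover have "(\<Sum>k\<in>{degree h + 1..N}. smult (coeff h k) (Ppoly k)) = 0"
    by (rule sum.neutral) (auto simp: coeff_eq_0)
  ultimately have "(\<Sum>k\<in>{1..N}. smult (coeff h k) (Ppoly k)) = (\<Sum>k\<in>{1..degree h}. smult (coeff h k) (Ppoly k))"
    by (simp add: sum.union_disjoint)
  then show ?thesis unfolding ext_sum_def by simp
qed

lemma ext_sum_add: "ext_sum (p + q) = ext_sum p + ext_sum q"
proof -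
  let ?N = "max (degree p) (degree q)"
  have "degree (p + q) \<le> ?N" by (rule degree_add_le) auto
  then show ?thesis
    by (simp add: ext_sum_bound[of p ?N] ext_sum_bound[of q ?N] ext_sum_bound[of "p+q" ?N]
         smult_add_left sum.distrib algebra_simps)
qed

lemma smult_sum_right: "smult c (\<Sum>i\<in>A. f i) = (\<Sum>i\<in>A. smult c (f i))"
  by (induction A rule: infinite_finite_induct) (auto simp: smult_add_right)

lemma ext_sum_smult: "ext_sum (smult c p) = smult c (ext_sum p)"
proof -
  have "degree (smult c p) \<le> degree p" by simp
  then show ?thesis
    by (simp add: ext_sum_bound[of p "degree p"] ext_sum_bound[of "smult c p" "degree p"]
         smult_sum_right smult_add_right)
qed

lemma ext_sum_0[simp]: "ext_sum 0 = 0"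
  using ext_sum_smult[of 0 0] by simp

lemma ext_sum_sum: "ext_sum (\<Sum>i\<in>A. f i) = (\<Sum>i\<in>A. ext_sum (f i))"
  by (induction A rule: infinite_finite_induct) (auto simp: ext_sum_add)

lemma nested_sum_add: "nested_sum as (p + q) = nested_sum as p + nested_sum as q"
  by (induction as) (auto simp: ext_sum_add pcompose_add)

lemma nested_sum_smult: "nested_sum as (smult c p) = smult c (nested_sum as p)"
  by (induction as) (auto simp: ext_sum_smult pcompose_smult)

lemma nested_sum_0[simp]: "nested_sum as 0 = 0"
  using nested_sum_smult[of as 0 0] by simp

lemma nested_sum_sum: "nested_sum as (\<Sum>i\<in>A. f i) = (\<Sum>i\<in>A. nested_sum as (f i))"
  by (induction A rule: infinite_finite_induct) (auto simp: nested_sum_add)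

lemma nested_sum_snoc:
  "nested_sum (as @ [a]) h = nested_sum as (pcompose (ext_sum h) [:0, a:])"
  by (induction as) auto

lemma pcompose_lin_expand:
  fixes p :: "real poly"
  assumes "degree p \<le> N"
  shows "pcompose p [:0, a:] = (\<Sum>k\<le>N. monom (a ^ k * coeff p k) k)"
proof -
  have m: "[:0, a:] = monom a (Suc 0)" by (simp add: monom_Suc monom_0)
  have "degree (pcompose p [:0, a:]) \<le> N"
    using degree_pcompose_le[of p "[:0,a:]"] assms by (auto intro: order_trans)
  then have "pcompose p [:0, a:] = (\<Sum>k\<le>N. monom (coeff (pcompose p [:0, a:]) k) k)"
    by (simp add: poly_as_sum_of_monoms')
  also have "\<dots> = (\<Sum>k\<le>N. monom (a ^ k * coeff p k) k)"
    by (simp only: m coeff_pcompose_monom_linear[of p a])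
  finally show ?thesis .
qed


declare bernoulli_num.simps[simp del]

lemma bern_rec:
  assumes "n \<ge> 1"
  shows "(\<Sum>i\<le>n. of_nat (Suc n choose i) * bernoulli_num i) = 0"
proof -
  have "bernoulli_num n = - (\<Sum>i<n. of_nat (Suc n choose i) * bernoulli_num i) / of_nat (Suc n)"
    using assms by (subst bernoulli_num.simps) simp
  then have "of_nat (Suc n) * bernoulli_num n = - (\<Sum>i<n. of_nat (Suc n choose i) * bernoulli_num i)"
    by (simp add: field_simps)
  moreover have "(Suc n choose n) = Suc n" by (simp add: binomial_Suc_n)
  ultimately show ?thesis by (simp add: lessThan_Suc_atMost[symmetric])
qed

lemma bernoulli_num_0: "bernoulli_num 0 = 1"
  by (subst bernoulli_num.simps) simp

lemma coeff_bernoulli_poly: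
  "coeff (bernoulli_poly n) k = (if k \<le> n then of_nat (n choose (n - k)) * bernoulli_num (n - k) else 0)"
proof -
  have "coeff (bernoulli_poly n) k = (\<Sum>i\<le>n. if n - i = k then of_nat (n choose i) * bernoulli_num i else 0)"
    unfolding bernoulli_poly_def by (simp add: coeff_sum coeff_monom)
  also have "\<dots> = (\<Sum>i\<in>{i. i \<le> n \<and> n - i = k}. of_nat (n choose i) * bernoulli_num i)"
    by (simp add: sum.If_cases Int_def conj_commute)
  also have "\<dots> = (if k \<le> n then of_nat (n choose (n - k)) * bernoulli_num (n - k) else 0)"
  proof (cases "k \<le> n")
    case True
    then have "{i. i \<le> n \<and> n - i = k} = {n - k}" by auto
    then show ?thesis using True by simp
  next
    case False
    then have e: "{i. i \<le> n \<and> n - i = k} = {}" by auto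
    show ?thesis using False by (simp only: e sum.empty) simp
  qed
  finally show ?thesis .
qed

lemma degree_bernoulli_poly: "degree (bernoulli_poly n) = n"
proof (rule antisym)
  show "degree (bernoulli_poly n) \<le> n"
    by (rule degree_le) (simp add: coeff_bernoulli_poly)
  show "n \<le> degree (bernoulli_poly n)"
    by (rule le_degree) (simp add: coeff_bernoulli_poly bernoulli_num_0)
qed

lemma lead_bernoulli_poly: "coeff (bernoulli_poly n) n = 1"
  by (simp add: coeff_bernoulli_poly bernoulli_num_0)

lemma poly_bernoulli_poly_1:
  assumes "n \<ge> 2"
  shows "poly (bernoulli_poly n) 1 = bernoulli_num n"
proof -
  obtain m where n: "n = Suc m" and m: "m \<ge> 1" using assms by (cases n) auto
  have "poly (bernoulli_poly n) 1 = (\<Sum>i\<le>n. of_nat (n choose i) * bernoulli_num i)"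
    unfolding bernoulli_poly_def by (simp add: poly_sum poly_monom)
  also have "\<dots> = (\<Sum>i\<le>m. of_nat (n choose i) * bernoulli_num i) + bernoulli_num n"
    unfolding n by simp
  also have "(\<Sum>i\<le>m. of_nat (n choose i) * bernoulli_num i) = 0"
    unfolding n by (rule bern_rec[OF m])
  finally show ?thesis by simp
qed

definition Qp :: "nat \<Rightarrow> real poly" where "Qp m = ext_sum (monom 1 m)"

lemma Qp_0: "Qp 0 = [:0, 1:]"
  unfolding Qp_def ext_sum_def by (simp add: monom_0)

lemma Qp_pos: assumes "m \<ge> 1" shows "Qp m = Ppoly m"
proof -
  have "(\<Sum>k\<in>{1..m}. smult (coeff (monom 1 m) k) (Ppoly k)) = (\<Sum>k\<in>{m}. smult (coeff (monom 1 m) k) (Ppoly k))"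
    by (rule sum.mono_neutral_right) (use assms in \<open>auto simp: coeff_monom\<close>)
  then show ?thesis unfolding Qp_def ext_sum_def using assms by (simp add: degree_monom_eq coeff_monom)
qed

lemma Ppoly_facts:
  assumes "m \<ge> 1"
  shows "coeff (Ppoly m) 0 = 0" "coeff (Ppoly m) (Suc m) = 1 / of_nat (Suc m)"
        "\<And>k. k > Suc m \<Longrightarrow> coeff (Ppoly m) k = 0"
proof -
  let ?B = "bernoulli_poly (Suc m)"
  let ?C = "pcompose ?B [:1, 1:]"
  have dC: "degree ?C = Suc m" by (simp add: degree_pcompose degree_bernoulli_poly)
  have lC: "coeff ?C (Suc m) = 1"
    using lead_coeff_comp[of "[:1,1:]" ?B] dC by (simp add: degree_bernoulli_poly lead_bernoulli_poly)
  show "coeff (Ppoly m) 0 = 0"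
    unfolding Ppoly_def using poly_bernoulli_poly_1[of "Suc m"] assms
    by (simp add: coeff_pcompose_0)
  show "coeff (Ppoly m) (Suc m) = 1 / of_nat (Suc m)"
    unfolding Ppoly_def using lC by simp
  show "coeff (Ppoly m) k = 0" if "k > Suc m" for k
    unfolding Ppoly_def using that dC by (simp add: coeff_eq_0 coeff_pCons split: nat.split)
qed

lemma Qp_facts:
  "coeff (Qp m) 0 = 0" "coeff (Qp m) (Suc m) = 1 / of_nat (Suc m)"
  "\<And>k. k > Suc m \<Longrightarrow> coeff (Qp m) k = 0"
proof -
  show "coeff (Qp m) 0 = 0"
    by (cases "m = 0") (auto simp: Qp_0 Qp_pos Ppoly_facts)
  show "coeff (Qp m) (Suc m) = 1 / of_nat (Suc m)"
    by (cases "m = 0") (auto simp: Qp_0 Qp_pos Ppoly_facts)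
  show "coeff (Qp m) k = 0" if "k > Suc m" for k
    using that by (cases "m = 0") (auto simp: Qp_0 Qp_pos Ppoly_facts coeff_pCons split: nat.split)
qed

lemma degree_Qp: "degree (Qp m) \<le> Suc m"
  by (rule degree_le) (auto intro: Qp_facts)


definition ymat :: "(nat \<Rightarrow> real) list \<Rightarrow> real mat" where
  "ymat ps = mat (length ps) (length ps) (\<lambda>(r, c). if c = 0 then 1 else (ps ! r) c)"

definition ydet :: "(nat \<Rightarrow> real) list \<Rightarrow> real" where
  "ydet ps = det (ymat ps)"

definition red :: "(nat \<Rightarrow> real) \<Rightarrow> (nat \<Rightarrow> real) \<Rightarrow> (nat \<Rightarrow> real)" where
  "red p0 p = (\<lambda>j. (p (Suc j) - p0 (Suc j)) / (p 1 - p0 1))"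

lemma prod_list_map_one: "prod_list (map (\<lambda>i. (1::real)) xs) = 1"
  by (induction xs) auto

lemma ymat_carrier[simp]: "ymat ps \<in> carrier_mat (length ps) (length ps)"
  unfolding ymat_def by auto

lemma ydet_cons:
  assumes nz: "\<forall>p\<in>set ps. p 1 \<noteq> p0 1"
  shows "ydet (p0 # ps) = prod_list (map (\<lambda>p. p 1 - p0 1) ps) * ydet (map (red p0) ps)"
proof -
  let ?n = "length ps"
  define A where "A = ymat (p0 # ps)"
  have A: "A \<in> carrier_mat (Suc ?n) (Suc ?n)" unfolding A_def using ymat_carrier[of "p0 # ps"] by simp
  define F where "F = mat (Suc ?n) (Suc ?n) (\<lambda>(r, c). if r = c then 1 else if c = 0 then -1 else (0::real))"
  have F: "F \<in> carrier_mat (Suc ?n) (Suc ?n)" unfolding F_def by auto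
  have detF: "det F = 1"
  proof -
    have "det F = prod_list (diag_mat F)"
      by (rule det_lower_triangular[OF _ F]) (auto simp: F_def)
    also have "diag_mat F = map (\<lambda>i. 1) [0..<Suc ?n]"
      unfolding diag_mat_def F_def by (auto simp del: upt_Suc intro!: map_cong)
    finally show ?thesis by (simp add: prod_list_map_one)
  qed
  define A' where "A' = F * A"
  have A'c: "A' \<in> carrier_mat (Suc ?n) (Suc ?n)" unfolding A'_def using F A by auto
  have A'e: "A' $$ (r, c) = (if r = 0 then A $$ (0, c) else A $$ (r, c) - A $$ (0, c))"
    if "r < Suc ?n" "c < Suc ?n" for r c
  proof -
    have "A' $$ (r, c) = (\<Sum>k<Suc ?n. F $$ (r, k) * A $$ (k, c))"
      unfolding A'_def using that F A
      by (simp add: scalar_prod_def atLeast0LessThan row_def col_def)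
    also have "\<dots> = (\<Sum>k<Suc ?n. (if k = r then A $$ (k, c) else 0) + (if k = 0 \<and> r \<noteq> 0 then - A $$ (0, c) else 0))"
      by (rule sum.cong) (use that in \<open>auto simp: F_def\<close>)
    also have "\<dots> = (if r = 0 then A $$ (0, c) else A $$ (r, c) - A $$ (0, c))"
      using that by (auto simp: sum.distrib)
    finally show ?thesis .
  qed
  have "det A' = det A" unfolding A'_def using det_mult[OF F A] detF by simp
  also have "det A' = (\<Sum>i<Suc ?n. A' $$ (i, 0) * cofactor A' i 0)"
    by (rule laplace_expansion_column[OF A'c]) simp
  also have "\<dots> = (\<Sum>i<Suc ?n. if i = 0 then cofactor A' 0 0 else 0)"
    by (rule sum.cong) (auto simp: A'e A_def ymat_def)
  also have "\<dots> = det (mat_delete A' 0 0)" by (simp add: cofactor_def)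
  finally have dA: "det A = det (mat_delete A' 0 0)" ..
  define D where "D = mat ?n ?n (\<lambda>(r, c). if r = c then (ps ! r) 1 - p0 1 else 0)"
  have D: "D \<in> carrier_mat ?n ?n" unfolding D_def by auto
  have "mat_delete A' 0 0 = D * ymat (map (red p0) ps)"
  proof (rule eq_matI)
    fix i j assume ij: "i < dim_row (D * ymat (map (red p0) ps))" "j < dim_col (D * ymat (map (red p0) ps))"
    then have i: "i < ?n" and j: "j < ?n" using D by (auto simp: ymat_def)
    have "(D * ymat (map (red p0) ps)) $$ (i, j) = (\<Sum>k<?n. D $$ (i, k) * ymat (map (red p0) ps) $$ (k, j))"
      using i j D by (simp add: scalar_prod_def atLeast0LessThan row_def col_def ymat_def)
    also have "\<dots> = (\<Sum>k<?n. if k = i then ((ps ! i) 1 - p0 1) * ymat (map (red p0) ps) $$ (i, j) else 0)"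
      by (rule sum.cong) (use i in \<open>auto simp: D_def\<close>)
    also have "\<dots> = ((ps ! i) 1 - p0 1) * ymat (map (red p0) ps) $$ (i, j)"
      using i by simp
    also have "\<dots> = (ps ! i) (Suc j) - p0 (Suc j)"
      using i j nz[rule_format, of "ps ! i"] by (auto simp: ymat_def red_def)
    also have "\<dots> = mat_delete A' 0 0 $$ (i, j)"
      using i j A'c by (simp add: mat_delete_def A'e A_def ymat_def)
    finally show "mat_delete A' 0 0 $$ (i, j) = (D * ymat (map (red p0) ps)) $$ (i, j)" ..
  qed (use A'c D in \<open>auto simp: mat_delete_def ymat_def\<close>)
  then have "det A = det D * ydet (map (red p0) ps)"
    unfolding dA ydet_def by (rule ssubst, intro det_mult[OF D]) (simp add: ymat_def[symmetric] ymat_carrier[of "map (red p0) ps", simplified])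
  moreover have "det D = prod_list (map (\<lambda>p. p 1 - p0 1) ps)"
  proof -
    have "det D = prod_list (diag_mat D)"
      by (rule det_upper_triangular[OF _ D]) (auto simp: D_def)
    also have "diag_mat D = map (\<lambda>p. p 1 - p0 1) ps"
      unfolding diag_mat_def D_def by (rule nth_equalityI) auto
    finally show ?thesis .
  qed
  ultimately show ?thesis unfolding A_def ydet_def by simp
qed


lemma ydet_swap:
  assumes k: "k < length ps" and l: "l < length ps" and kl: "k \<noteq> l"
  shows "ydet (ps[k := ps ! l, l := ps ! k]) = - ydet ps"
proof -
  have "ymat (ps[k := ps ! l, l := ps ! k]) = swaprows k l (ymat ps)"
    by (rule eq_matI) (use k l kl in \<open>auto simp: ymat_def nth_list_update\<close>)
  then show ?thesis unfolding ydet_def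
    using det_swaprows[OF k l kl ymat_carrier] by simp
qed

lemma ydet_Nil: "ydet [] = 1"
  unfolding ydet_def ymat_def by (simp add: det_def)

lemma ydet_single: "ydet [p] = 1"
proof -
  have "ymat [p] = 1\<^sub>m 1" by (rule eq_matI) (auto simp: ymat_def)
  then show ?thesis unfolding ydet_def by simp
qed

lemma ydet_two: "ydet [p0, p] = p 1 - p0 1"
proof (cases "p 1 = p0 1")
  case False
  then show ?thesis using ydet_cons[of "[p]" p0] by (simp add: ydet_single)
next
  case True
  have "row (ymat [p0, p]) 0 = row (ymat [p0, p]) 1"
    by (rule eq_vecI) (use True in \<open>auto simp: ymat_def row_def less_Suc_eq\<close>)
  then have "ydet [p0, p] = 0" unfolding ydet_def
    by (intro det_identical_rows[OF ymat_carrier, of 0 1]) auto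
  then show ?thesis using True by simp
qed


function altsum :: "('a list \<Rightarrow> real) \<Rightarrow> 'a list \<Rightarrow> real" where
  "altsum F [] = F []"
| "altsum F (a # rest) = altsum (\<lambda>ys. F (a # ys)) rest
     - (\<Sum>j<length rest. altsum (\<lambda>ys. F (rest ! j # ys)) (rest[j := a]))"
  by pat_completeness auto
termination by (relation "measure (\<lambda>(F, vs). length vs)") auto

lemma altsum_cong:
  "(\<And>ys. mset ys = mset vs \<Longrightarrow> F ys = H ys) \<Longrightarrow> altsum F vs = altsum H vs"
proof (induction F vs arbitrary: H rule: altsum.induct)
  case (1 F)
  then show ?case by simp
next
  case (2 F a rest)
  have A: "altsum (\<lambda>ys. F (a # ys)) rest = altsum (\<lambda>ys. H (a # ys)) rest"
    by (rule "2.IH"(1)) (use "2.prems" in auto)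
  have B: "altsum (\<lambda>ys. F (rest ! j # ys)) (rest[j := a]) = altsum (\<lambda>ys. H (rest ! j # ys)) (rest[j := a])"
    if j: "j < length rest" for j
  proof -
    have "F (rest ! j # ys) = H (rest ! j # ys)" if "mset ys = mset (rest[j := a])" for ys
    proof -
      have "mset (rest ! j # ys) = mset (a # rest)"
        using j that by (simp add: mset_update insert_DiffM)
      then show ?thesis using "2.prems" by blast
    qed
    then show ?thesis using "2.IH"(2)[of j "\<lambda>ys. H (rest ! j # ys)"] j by auto
  qed
  show ?case using A B by simp
qed

lemma altsum_mult: "altsum (\<lambda>ys. c * F ys) vs = c * altsum F vs"
proof (induction F vs rule: altsum.induct)
  case (1 F) then show ?case by simp
next
  case (2 F a rest)
  then show ?case by (simp add: sum_distrib_left right_diff_distrib)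
qed

lemma altsum_zero: "(\<And>ys. mset ys = mset vs \<Longrightarrow> F ys = 0) \<Longrightarrow> altsum F vs = 0"
  using altsum_cong[of vs F "\<lambda>ys. 0 * F ys"] altsum_mult[of 0 F vs] by simp

definition PS :: "(nat list \<Rightarrow> real) \<Rightarrow> nat list \<Rightarrow> real" where
  "PS F vs = (\<Sum>\<sigma> | \<sigma> permutes set vs. of_int (sign \<sigma>) * F (map \<sigma> vs))"

lemma conj_permutes:
  assumes q: "q permutes S" and a: "a \<notin> S" and b: "b \<in> S"
  shows "Transposition.transpose a b \<circ> q \<circ> Transposition.transpose a b permutes (Transposition.transpose a b ` S)"
proof -
  let ?t = "Transposition.transpose a b"
  have "?t \<circ> q \<circ> ?t permutes insert a S"
    by (intro permutes_compose permutes_swap_id permutes_subset[OF q]) (use b in auto)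
  moreover have "(?t \<circ> q \<circ> ?t) x = x" if "x \<notin> ?t ` S" for x
  proof -
    have "?t x \<notin> S" using that by (metis image_eqI transpose_involutory)
    then have "q (?t x) = ?t x" using q by (simp add: permutes_not_in)
    then show ?thesis by simp
  qed
  ultimately show ?thesis unfolding permutes_def by metis
qed

lemma PS_altsum: "distinct vs \<Longrightarrow> PS F vs = altsum F vs"
proof (induction vs arbitrary: F rule: length_induct)
  case (1 vs)
  show ?case
  proof (cases vs)
    case Nil
    then show ?thesis by (simp add: PS_def permutes_empty sign_id)
  next
    case (Cons a rest)
    let ?S = "set rest"
    have a: "a \<notin> ?S" and dr: "distinct rest" using "1.prems" Cons by auto
    define f where "f = (\<lambda>\<sigma>. of_int (sign \<sigma>) * F (map \<sigma> (a # rest)))"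
    have "PS F vs = sum f {p. p permutes insert a ?S}"
      unfolding PS_def f_def Cons by simp
    also have "\<dots> = (\<Sum>b\<in>insert a ?S. \<Sum>q\<in>{p. p permutes ?S}. f (Transposition.transpose a b \<circ> q))"
      by (rule sum_over_permutations_insert) (use a in auto)
    also have "\<dots> = (\<Sum>q\<in>{p. p permutes ?S}. f q) + (\<Sum>b\<in>?S. \<Sum>q\<in>{p. p permutes ?S}. f (Transposition.transpose a b \<circ> q))"
      using a by (simp add: sum.insert)
    also have "(\<Sum>q\<in>{p. p permutes ?S}. f q) = altsum (\<lambda>ys. F (a # ys)) rest"
    proof -
      have "(\<Sum>q\<in>{p. p permutes ?S}. f q) = PS (\<lambda>ys. F (a # ys)) rest"
        unfolding PS_def f_def
        by (rule sum.cong) (use a in \<open>auto simp: permutes_not_in\<close>)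
      also have "\<dots> = altsum (\<lambda>ys. F (a # ys)) rest"
        using "1.IH" Cons dr by auto
      finally show ?thesis .
    qed
    also have "(\<Sum>b\<in>?S. \<Sum>q\<in>{p. p permutes ?S}. f (Transposition.transpose a b \<circ> q))
       = (\<Sum>b\<in>?S. - altsum (\<lambda>ys. F (b # ys)) (map (Transposition.transpose a b) rest))"
    proof (rule sum.cong[OF refl])
      fix b assume b: "b \<in> ?S"
      let ?t = "Transposition.transpose a b"
      have ab: "a \<noteq> b" using a b by auto
      have dm: "distinct (map ?t rest)" using dr by (simp add: distinct_map inj_on_def) (metis transpose_involutory)
      have sm: "set (map ?t rest) = ?t ` ?S" by simp
      have "(\<Sum>q\<in>{p. p permutes ?S}. f (?t \<circ> q)) = (\<Sum>q\<in>{p. p permutes ?S}. - (of_int (sign q) * F (b # map (?t \<circ> q) rest)))"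
      proof (rule sum.cong[OF refl])
        fix q assume "q \<in> {p. p permutes ?S}"
        then have q: "q permutes ?S" by simp
        have "sign (?t \<circ> q) = - sign q"
          using sign_compose[OF permutation_swap_id permutes_imp_permutation[OF _ q]] ab
          by (simp add: sign_swap_id)
        moreover have "q a = a" using q a by (simp add: permutes_not_in)
        ultimately show "f (?t \<circ> q) = - (of_int (sign q) * F (b # map (?t \<circ> q) rest))"
          unfolding f_def by simp
      qed
      also have "\<dots> = - PS (\<lambda>ys. F (b # ys)) (map ?t rest)"
      proof -
        have "(\<Sum>q\<in>{p. p permutes ?S}. of_int (sign q) * F (b # map (?t \<circ> q) rest))
            = (\<Sum>q'\<in>{p. p permutes ?t ` ?S}. of_int (sign q') * F (b # map q' (map ?t rest)))"
        proof (rule sum.reindex_bij_witness[where i = "\<lambda>q. ?t \<circ> q \<circ> ?t" and j = "\<lambda>q. ?t \<circ> q \<circ> ?t"])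
          fix q assume "q \<in> {p. p permutes ?t ` ?S}"
          then show "?t \<circ> (?t \<circ> q \<circ> ?t) \<circ> ?t = q" by (auto simp: fun_eq_iff)
        next
          fix q assume "q \<in> {p. p permutes ?t ` ?S}"
          then have q: "q permutes ?t ` ?S" by simp
          have "Transposition.transpose b a \<circ> q \<circ> Transposition.transpose b a permutes Transposition.transpose b a ` (?t ` ?S)"
            by (rule conj_permutes[OF q]) (use a b in \<open>auto simp: transpose_def\<close>)
          then have "?t \<circ> q \<circ> ?t permutes ?t ` (?t ` ?S)" by (simp add: transpose_commute)
          moreover have "?t ` (?t ` ?S) = ?S" by (simp add: image_image)
          ultimately show "?t \<circ> q \<circ> ?t \<in> {p. p permutes ?S}" by simp
        next
          fix q assume "q \<in> {p. p permutes ?S}"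
          then show "?t \<circ> (?t \<circ> q \<circ> ?t) \<circ> ?t = q" by (auto simp: fun_eq_iff)
        next
          fix q assume "q \<in> {p. p permutes ?S}"
          then show "?t \<circ> q \<circ> ?t \<in> {p. p permutes ?t ` ?S}"
            using conj_permutes[OF _ a b] by simp
        next
          fix q assume "q \<in> {p. p permutes ?S}"
          then have q: "q permutes ?S" by simp
          have pq: "permutation q" using q permutes_imp_permutation by blast
          have "sign (?t \<circ> q \<circ> ?t) = sign q"
            using sign_compose[OF permutation_compose[OF permutation_swap_id pq] permutation_swap_id]
                  sign_compose[OF permutation_swap_id pq]
            by (simp add: sign_swap_id)
          moreover have tt: "?t \<circ> q \<circ> ?t \<circ> ?t = ?t \<circ> q" by (auto simp: fun_eq_iff)
          ultimately show "of_int (sign (?t \<circ> q \<circ> ?t)) * F (b # map (?t \<circ> q \<circ> ?t) (map ?t rest))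
              = of_int (sign q) * F (b # map (?t \<circ> q) rest)" by (simp add: tt)
        qed
        then show ?thesis unfolding PS_def sm by (simp add: sum_negf)
      qed
      also have "\<dots> = - altsum (\<lambda>ys. F (b # ys)) (map ?t rest)"
        using "1.IH" Cons dm by auto
      finally show "(\<Sum>q\<in>{p. p permutes ?S}. f (?t \<circ> q)) = - altsum (\<lambda>ys. F (b # ys)) (map ?t rest)" .
    qed
    also have "(\<Sum>b\<in>?S. - altsum (\<lambda>ys. F (b # ys)) (map (Transposition.transpose a b) rest))
        = (\<Sum>j<length rest. - altsum (\<lambda>ys. F (rest ! j # ys)) (rest[j := a]))"
    proof -
      have "?S = (\<lambda>j. rest ! j) ` {..<length rest}" by (auto simp: in_set_conv_nth)
      moreover have "inj_on (\<lambda>j. rest ! j) {..<length rest}"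
        using dr by (auto simp: inj_on_def nth_eq_iff_index_eq)
      ultimately have "(\<Sum>b\<in>?S. - altsum (\<lambda>ys. F (b # ys)) (map (Transposition.transpose a b) rest))
          = (\<Sum>j<length rest. - altsum (\<lambda>ys. F (rest ! j # ys)) (map (Transposition.transpose a (rest ! j)) rest))"
        by (simp add: sum.reindex)
      also have "\<dots> = (\<Sum>j<length rest. - altsum (\<lambda>ys. F (rest ! j # ys)) (rest[j := a]))"
      proof (rule sum.cong[OF refl])
        fix j assume j: "j \<in> {..<length rest}"
        have "map (Transposition.transpose a (rest ! j)) rest = rest[j := a]"
        proof (rule nth_equalityI)
          fix r assume r: "r < length (map (Transposition.transpose a (rest ! j)) rest)"
          have "rest ! r \<noteq> a" using r a by auto
          moreover have "rest ! r = rest ! j \<longleftrightarrow> r = j" using r j dr by (auto simp: nth_eq_iff_index_eq)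
          ultimately show "map (Transposition.transpose a (rest ! j)) rest ! r = rest[j := a] ! r"
            using r j by (auto simp: transpose_def nth_list_update)
        qed simp
        then show "- altsum (\<lambda>ys. F (rest ! j # ys)) (map (Transposition.transpose a (rest ! j)) rest)
            = - altsum (\<lambda>ys. F (rest ! j # ys)) (rest[j := a])" by simp
      qed
      finally show ?thesis .
    qed
    finally show ?thesis unfolding Cons by (simp add: sum_negf)
  qed
qed


definition lag :: "nat \<Rightarrow> real set \<Rightarrow> real" where
  "lag k Z = (\<Sum>w\<in>Z. w ^ k / (\<Prod>w'\<in>Z - {w}. w - w'))"

lemma lag_rec:
  assumes Z: "finite Z" and c: "c \<in> Z"
  shows "lag (Suc k) Z = c * lag k Z + lag k (Z - {c})"
proof -
  have "lag (Suc k) Z - c * lag k Z = (\<Sum>w\<in>Z. w ^ k * (w - c) / (\<Prod>w'\<in>Z - {w}. w - w'))"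
    unfolding lag_def by (simp add: sum_distrib_left sum_subtractf[symmetric] algebra_simps diff_divide_distrib)
  also have "\<dots> = (\<Sum>w\<in>Z - {c}. w ^ k * (w - c) / (\<Prod>w'\<in>Z - {w}. w - w'))"
    by (rule sum.mono_neutral_right) (use Z c in auto)
  also have "\<dots> = (\<Sum>w\<in>Z - {c}. w ^ k / (\<Prod>w'\<in>(Z - {c}) - {w}. w - w'))"
  proof (rule sum.cong[OF refl])
    fix w assume w: "w \<in> Z - {c}"
    have "(\<Prod>w'\<in>Z - {w}. w - w') = (w - c) * (\<Prod>w'\<in>(Z - {w}) - {c}. w - w')"
      by (rule prod.remove) (use Z c w in auto)
    moreover have "(Z - {w}) - {c} = (Z - {c}) - {w}" by auto
    moreover have "w - c \<noteq> 0" using w by auto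
    ultimately show "w ^ k * (w - c) / (\<Prod>w'\<in>Z - {w}. w - w') = w ^ k / (\<Prod>w'\<in>(Z - {c}) - {w}. w - w')"
      by simp
  qed
  finally show ?thesis unfolding lag_def by simp
qed

lemma lag_main:
  "finite Z \<Longrightarrow> card Z = N \<Longrightarrow> N \<ge> 1 \<Longrightarrow> k < N \<Longrightarrow> lag k Z = (if k = N - 1 then 1 else 0)"
proof (induction N arbitrary: Z k)
  case 0 then show ?case by simp
next
  case (Suc N)
  show ?case
  proof (cases "N = 0")
    case True
    then obtain a where Z: "Z = {a}" using Suc.prems card_1_singletonE by auto
    then show ?thesis using True Suc.prems by (simp add: lag_def)
  next
    case False
    obtain c where c: "c \<in> Z" using Suc.prems by fastforce
    have cZ: "card (Z - {c}) = N" using Suc.prems c by simp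
    then obtain c' where c': "c' \<in> Z - {c}" using False
      by (metis all_not_in_conv card.empty)
    have cZ': "card (Z - {c'}) = N" using Suc.prems c' by simp
    have lower: "lag j Z = 0" if j: "j < N" for j
    proof -
      have "c * lag j Z + lag j (Z - {c}) = c' * lag j Z + lag j (Z - {c'})"
        using lag_rec[OF Suc.prems(1) c, of j] lag_rec[OF Suc.prems(1), of c' j] c' by simp
      moreover have "lag j (Z - {c}) = lag j (Z - {c'})"
        using Suc.IH[of "Z - {c}" j] Suc.IH[of "Z - {c'}" j] cZ cZ' Suc.prems(1) False j by simp
      ultimately have "(c - c') * lag j Z = 0" by (simp add: algebra_simps)
      moreover have "c - c' \<noteq> 0" using c' by auto
      ultimately show ?thesis by simp
    qed
    show ?thesis
    proof (cases "k < N")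
      case True
      then show ?thesis using lower by simp
    next
      case kN: False
      then have k: "k = Suc (N - 1)" using Suc.prems False by auto
      have "lag k Z = c * lag (N - 1) Z + lag (N - 1) (Z - {c})"
        unfolding k by (rule lag_rec[OF Suc.prems(1) c])
      also have "lag (N - 1) Z = 0" using lower False by simp
      also have "lag (N - 1) (Z - {c}) = 1"
        using Suc.IH[of "Z - {c}" "N - 1"] cZ Suc.prems(1) False by simp
      finally show ?thesis using k False by simp
    qed
  qed
qed


definition zz :: "(nat \<Rightarrow> nat \<Rightarrow> real) \<Rightarrow> (nat \<Rightarrow> real) \<Rightarrow> nat list \<Rightarrow> real" where
  "zz P q ws = ydet (map P ws @ [q]) / ydet (map P ws)"

definition ND :: "(nat \<Rightarrow> nat \<Rightarrow> real) \<Rightarrow> (nat \<Rightarrow> real) \<Rightarrow> nat list \<Rightarrow> bool" where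
  "ND P q vs \<longleftrightarrow> (\<forall>ws. distinct ws \<and> set ws \<subseteq> set vs \<longrightarrow> ydet (map P ws) \<noteq> 0 \<and> ydet (map P ws @ [q]) \<noteq> 0)"

definition Pr :: "(nat \<Rightarrow> nat \<Rightarrow> real) \<Rightarrow> nat \<Rightarrow> nat \<Rightarrow> nat \<Rightarrow> real" where
  "Pr P b = (\<lambda>c. red (P b) (P c))"

definition qr :: "(nat \<Rightarrow> nat \<Rightarrow> real) \<Rightarrow> (nat \<Rightarrow> real) \<Rightarrow> nat \<Rightarrow> nat \<Rightarrow> real" where
  "qr P q b = red (P b) q"

lemma ND_first: "ND P q vs \<Longrightarrow> b \<in> set vs \<Longrightarrow> c \<in> set vs \<Longrightarrow> c \<noteq> b \<Longrightarrow> P c 1 \<noteq> P b 1"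
  unfolding ND_def using ydet_two[of "P b" "P c"]
  by (metis (no_types, lifting) distinct_length_2_or_more distinct_singleton eq_iff_diff_eq_0
      empty_subsetI insert_subset list.set(1) list.set(2) list.simps(9) list.map(1))

lemma ND_q: "ND P q vs \<Longrightarrow> b \<in> set vs \<Longrightarrow> q 1 \<noteq> P b 1"
proof -
  assume nd: "ND P q vs" and b: "b \<in> set vs"
  have "ydet (map P [b] @ [q]) \<noteq> 0" using nd b unfolding ND_def by (metis distinct_singleton empty_subsetI insert_subset list.set(1) list.set(2))
  then show ?thesis using ydet_two[of "P b" q] by simp
qed

lemma prod_list_nz: fixes P :: "nat \<Rightarrow> nat \<Rightarrow> real" shows "(\<forall>c\<in>set ws. P c 1 \<noteq> P b 1) \<Longrightarrow> prod_list (map (\<lambda>p. p 1 - P b 1) (map P ws)) \<noteq> 0"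
  by (induction ws) auto

lemma ydet_red_P:
  fixes P :: "nat \<Rightarrow> nat \<Rightarrow> real"
  assumes "\<forall>c\<in>set ws. P c 1 \<noteq> P b 1"
  shows "ydet (P b # map P ws) = prod_list (map (\<lambda>p. p 1 - P b 1) (map P ws)) * ydet (map (Pr P b) ws)"
  using ydet_cons[of "map P ws" "P b"] assms by (simp add: Pr_def comp_def)

lemma ydet_red_Pq:
  fixes P :: "nat \<Rightarrow> nat \<Rightarrow> real"
  assumes "\<forall>c\<in>set ws. P c 1 \<noteq> P b 1" "q 1 \<noteq> P b 1"
  shows "ydet (P b # map P ws @ [q]) = prod_list (map (\<lambda>p. p 1 - P b 1) (map P ws)) * (q 1 - P b 1)
            * ydet (map (Pr P b) ws @ [qr P q b])"
  using ydet_cons[of "map P ws @ [q]" "P b"] assms by (simp add: Pr_def qr_def comp_def)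

lemma ND_red:
  assumes nd: "ND P q vs" and b: "b \<in> set vs" and L: "set L \<subseteq> set vs - {b}"
  shows "ND (Pr P b) (qr P q b) L"
  unfolding ND_def
proof (intro allI impI)
  fix ws assume ws: "distinct ws \<and> set ws \<subseteq> set L"
  then have bws: "distinct (b # ws) \<and> set (b # ws) \<subseteq> set vs" using L b by auto
  have c1: "\<forall>c\<in>set ws. P c 1 \<noteq> P b 1" using ws L ND_first[OF nd b] by auto
  have q1: "q 1 \<noteq> P b 1" using ND_q[OF nd b] .
  have "ydet (map P (b # ws)) \<noteq> 0" "ydet (map P (b # ws) @ [q]) \<noteq> 0" using nd bws unfolding ND_def by blast+
  then show "ydet (map (Pr P b) ws) \<noteq> 0 \<and> ydet (map (Pr P b) ws @ [qr P q b]) \<noteq> 0"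
    using ydet_red_P[of ws P b, OF c1] ydet_red_Pq[of ws P b q, OF c1 q1] by auto
qed

lemma zz_Nil: "zz P q [] = 1"
  unfolding zz_def by (simp add: ydet_Nil ydet_single)

lemma zz_cons:
  assumes nd: "ND P q vs" and b: "b \<in> set vs" and ws: "set ws \<subseteq> set vs - {b}"
  shows "zz P q (b # ws) = (q 1 - P b 1) * zz (Pr P b) (qr P q b) ws"
proof -
  have c1: "\<forall>c\<in>set ws. P c 1 \<noteq> P b 1" using ws ND_first[OF nd b] by auto
  have q1: "q 1 \<noteq> P b 1" using ND_q[OF nd b] .
  show ?thesis unfolding zz_def using ydet_red_P[of ws P b, OF c1] ydet_red_Pq[of ws P b q, OF c1 q1] prod_list_nz[of ws P b, OF c1]
    by simp
qed

lemma prod_zz_shift: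
  assumes nd: "ND P q vs" and b: "b \<in> set vs" and ys: "set ys \<subseteq> set vs - {b}"
  shows "(\<Prod>j\<in>{Suc l..n}. zz P q (take j (b # ys)))
        = (q 1 - P b 1) ^ (n - l) * (\<Prod>j\<in>{l..<n}. zz (Pr P b) (qr P q b) (take j ys))"
proof -
  have e: "{Suc l..n} = Suc ` {l..<n}" by (auto simp: image_iff)
  have "(\<Prod>j\<in>{Suc l..n}. zz P q (take j (b # ys))) = (\<Prod>j\<in>{l..<n}. zz P q (b # take j ys))"
    by (simp only: e, subst prod.reindex) auto
  also have "\<dots> = (\<Prod>j\<in>{l..<n}. (q 1 - P b 1) * zz (Pr P b) (qr P q b) (take j ys))"
    by (rule prod.cong[OF refl], rule zz_cons[OF nd b]) (use ys in \<open>auto dest: in_set_takeD\<close>)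
  also have "\<dots> = (q 1 - P b 1) ^ (n - l) * (\<Prod>j\<in>{l..<n}. zz (Pr P b) (qr P q b) (take j ys))"
    by (simp add: prod.distrib)
  finally show ?thesis .
qed

lemma sum_list_nth_set:
  assumes "distinct xs"
  shows "(\<Sum>j<length xs. f (xs ! j)) = (\<Sum>b\<in>set xs. f b)"
proof -
  have "set xs = (\<lambda>j. xs ! j) ` {..<length xs}" by (auto simp: in_set_conv_nth)
  moreover have "inj_on (\<lambda>j. xs ! j) {..<length xs}"
    using assms by (auto simp: inj_on_def nth_eq_iff_index_eq)
  ultimately show ?thesis by (simp add: sum.reindex)
qed

lemma altsum_first:
  assumes dv: "distinct vs" and ne: "vs \<noteq> []"
    and T: "\<And>b L. b \<in> set vs \<Longrightarrow> distinct L \<Longrightarrow> set L = set vs - {b} \<Longrightarrow>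
              altsum (\<lambda>ys. F (b # ys)) L = ydet (P b # map P L @ [q]) * \<phi> b"
  shows "altsum F vs = ydet (map P vs @ [q]) * (\<Sum>b\<in>set vs. \<phi> b)"
proof -
  obtain a rest where vs: "vs = a # rest" using ne by (cases vs) auto
  have a: "a \<notin> set rest" and dr: "distinct rest" using dv vs by auto
  let ?Y = "ydet (map P vs @ [q])"
  have "altsum (\<lambda>ys. F (a # ys)) rest = ydet (P a # map P rest @ [q]) * \<phi> a"
    by (rule T) (use dv vs in auto)
  then have Ta: "altsum (\<lambda>ys. F (a # ys)) rest = ?Y * \<phi> a" by (simp only: vs list.map append_Cons)
  have Tj: "altsum (\<lambda>ys. F (rest ! j # ys)) (rest[j := a]) = - ?Y * \<phi> (rest ! j)"
    if j: "j < length rest" for j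
  proof -
    have d1: "distinct (rest[j := a])" using dr a j by (simp add: distinct_list_update)
    have s1: "set (rest[j := a]) = set vs - {rest ! j}"
      using j dr a vs by (auto simp: set_update_distinct)
    have rj: "rest ! j \<in> set vs" using j vs by simp
    have "altsum (\<lambda>ys. F (rest ! j # ys)) (rest[j := a]) = ydet (P (rest ! j) # map P (rest[j := a]) @ [q]) * \<phi> (rest ! j)"
      by (rule T[OF rj d1 s1])
    also have "P (rest ! j) # map P (rest[j := a]) @ [q]
        = (map P vs @ [q])[0 := (map P vs @ [q]) ! Suc j, Suc j := (map P vs @ [q]) ! 0]"
    proof -
      have "(map P vs @ [q]) ! Suc j = P (rest ! j)" using j vs by (simp add: nth_append)
      moreover have "(map P vs @ [q]) ! 0 = P a" using vs by simp
      moreover have "(map P vs @ [q])[0 := P (rest ! j)] = P (rest ! j) # map P rest @ [q]" using vs by simp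
      moreover have "(P (rest ! j) # map P rest @ [q])[Suc j := P a] = P (rest ! j) # map P (rest[j := a]) @ [q]"
        using j by (simp add: map_update list_update_append)
      ultimately show ?thesis by simp
    qed
    also have "ydet ((map P vs @ [q])[0 := (map P vs @ [q]) ! Suc j, Suc j := (map P vs @ [q]) ! 0]) = - ?Y"
      by (rule ydet_swap) (use j vs in auto)
    finally show ?thesis by simp
  qed
  have "altsum F vs = altsum (\<lambda>ys. F (a # ys)) rest - (\<Sum>j<length rest. altsum (\<lambda>ys. F (rest ! j # ys)) (rest[j := a]))"
    unfolding vs by (rule altsum.simps(2))
  also have "\<dots> = ?Y * \<phi> a - (\<Sum>j<length rest. - ?Y * \<phi> (rest ! j))"
    using Ta Tj by (simp only:) (rule arg_cong[where f = "\<lambda>x. _ - x"], rule sum.cong, auto)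
  also have "\<dots> = ?Y * (\<phi> a + (\<Sum>j<length rest. \<phi> (rest ! j)))"
    by (simp add: sum_negf sum_distrib_left algebra_simps)
  also have "(\<Sum>j<length rest. \<phi> (rest ! j)) = (\<Sum>b\<in>set rest. \<phi> b)"
    by (rule sum_list_nth_set[OF dr])
  also have "\<phi> a + (\<Sum>b\<in>set rest. \<phi> b) = (\<Sum>b\<in>set vs. \<phi> b)"
    using a vs by simp
  finally show ?thesis .
qed


lemma lag_conv:
  fixes P :: "nat \<Rightarrow> nat \<Rightarrow> real"
  assumes nd: "ND P q vs"
  shows "(\<Sum>b\<in>set vs. (q 1 - P b 1) ^ k / (\<Prod>c\<in>set vs - {b}. (q 1 - P b 1) - (q 1 - P c 1)))
       = lag k ((\<lambda>b. q 1 - P b 1) ` set vs)"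
proof -
  let ?z = "\<lambda>b. q 1 - P b 1"
  have inj: "inj_on ?z (set vs)" using ND_first[OF nd] by (auto simp: inj_on_def)
  have "lag k (?z ` set vs) = (\<Sum>b\<in>set vs. ?z b ^ k / (\<Prod>w'\<in>?z ` set vs - {?z b}. ?z b - w'))"
    unfolding lag_def by (subst sum.reindex[OF inj]) simp
  also have "\<dots> = (\<Sum>b\<in>set vs. ?z b ^ k / (\<Prod>c\<in>set vs - {b}. ?z b - ?z c))"
  proof (rule sum.cong[OF refl])
    fix b assume b: "b \<in> set vs"
    have "?z ` set vs - {?z b} = ?z ` (set vs - {b})" using inj b by (auto simp: inj_on_def)
    moreover have "inj_on ?z (set vs - {b})" using inj by (rule inj_on_subset) auto
    ultimately show "?z b ^ k / (\<Prod>w'\<in>?z ` set vs - {?z b}. ?z b - w') = ?z b ^ k / (\<Prod>c\<in>set vs - {b}. ?z b - ?z c)"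
      by (simp add: prod.reindex)
  qed
  finally show ?thesis ..
qed

lemma card_z: "ND P q vs \<Longrightarrow> distinct vs \<Longrightarrow> card ((\<lambda>b. q 1 - P b 1) ` set vs) = length vs"
proof -
  assume nd: "ND P q vs" and d: "distinct vs"
  have "inj_on (\<lambda>b. q 1 - P b 1) (set vs)" using ND_first[OF nd] by (auto simp: inj_on_def)
  then show ?thesis using d by (simp add: card_image distinct_card)
qed

lemma L_facts:
  assumes "b \<in> set vs" "distinct L" "set L = set vs - {b}" "distinct vs" "length vs = Suc n"
  shows "length L = n"
proof -
  have "length L = card (set L)" using assms(2) by (simp add: distinct_card)
  also have "\<dots> = card (set vs) - 1" using assms(1,3) by (simp add: card_Diff_singleton)
  also have "card (set vs) = Suc n" using assms(4,5) by (simp add: distinct_card)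
  finally show ?thesis by simp
qed

lemma core1:
  "length vs = n \<Longrightarrow> distinct vs \<Longrightarrow> ND P q vs \<Longrightarrow>
   altsum (\<lambda>ws. \<Prod>j\<in>{1..n}. zz P q (take j ws)) vs = ydet (map P vs @ [q])"
proof (induction n arbitrary: P q vs)
  case 0
  then show ?case by (simp add: ydet_single)
next
  case (Suc n)
  let ?z = "\<lambda>b. q 1 - P b 1"
  define \<phi> where "\<phi> b = ?z b ^ n / (\<Prod>c\<in>set vs - {b}. ?z b - ?z c)" for b
  have ne: "vs \<noteq> []" using Suc.prems by auto
  have "altsum (\<lambda>ws. \<Prod>j\<in>{1..Suc n}. zz P q (take j ws)) vs = ydet (map P vs @ [q]) * (\<Sum>b\<in>set vs. \<phi> b)"
  proof (rule altsum_first[OF Suc.prems(2) ne])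
    fix b L assume b: "b \<in> set vs" and dL: "distinct L" and sL: "set L = set vs - {b}"
    have lL: "length L = n" using L_facts[OF b dL sL Suc.prems(2,1)] .
    have ndL: "ND (Pr P b) (qr P q b) L" using ND_red[OF Suc.prems(3) b] sL by simp
    have c1: "\<forall>c\<in>set L. P c 1 \<noteq> P b 1" using ND_first[OF Suc.prems(3) b] sL by auto
    have q1: "q 1 \<noteq> P b 1" using ND_q[OF Suc.prems(3) b] .
    have "altsum (\<lambda>ys. \<Prod>j\<in>{1..Suc n}. zz P q (take j (b # ys))) L
        = altsum (\<lambda>ys. ?z b ^ Suc n * (\<Prod>j\<in>{1..n}. zz (Pr P b) (qr P q b) (take j ys))) L"
    proof (rule altsum_cong)
      fix ys assume "mset ys = mset L"
      then have ys: "set ys \<subseteq> set vs - {b}" using sL by (metis mset_eq_setD order_refl)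
      have "(\<Prod>j\<in>{Suc 0..Suc n}. zz P q (take j (b # ys)))
          = ?z b ^ (Suc n - 0) * (\<Prod>j\<in>{0..<Suc n}. zz (Pr P b) (qr P q b) (take j ys))"
        by (rule prod_zz_shift[OF Suc.prems(3) b ys])
      also have "{0..<Suc n} = insert 0 {1..n}" by auto
      finally show "(\<Prod>j\<in>{1..Suc n}. zz P q (take j (b # ys)))
          = ?z b ^ Suc n * (\<Prod>j\<in>{1..n}. zz (Pr P b) (qr P q b) (take j ys))"
        by (simp add: zz_Nil)
    qed
    also have "\<dots> = ?z b ^ Suc n * ydet (map (Pr P b) L @ [qr P q b])"
      by (simp only: altsum_mult Suc.IH[OF lL dL ndL])
    also have "\<dots> = ydet (P b # map P L @ [q]) * \<phi> b"
    proof -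
      have pr: "prod_list (map (\<lambda>p. p 1 - P b 1) (map P L)) = (\<Prod>c\<in>set vs - {b}. ?z b - ?z c)"
        using dL sL by (simp add: prod.distinct_set_conv_list[symmetric] comp_def)
      have nz: "(\<Prod>c\<in>set vs - {b}. ?z b - ?z c) \<noteq> 0"
        using c1 sL by (auto simp: prod_zero_iff)
      show ?thesis unfolding ydet_red_Pq[of L P b q, OF c1 q1] pr \<phi>_def using nz q1 by (simp add: field_simps)
    qed
    finally show "altsum (\<lambda>ys. \<Prod>j\<in>{1..Suc n}. zz P q (take j (b # ys))) L = ydet (P b # map P L @ [q]) * \<phi> b" .
  qed
  also have "(\<Sum>b\<in>set vs. \<phi> b) = lag n (?z ` set vs)"
    unfolding \<phi>_def by (rule lag_conv[OF Suc.prems(3)])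
  also have "\<dots> = 1"
    using lag_main[of "?z ` set vs" "Suc n" n] card_z[OF Suc.prems(3,2)] Suc.prems(1) by simp
  finally show ?case by simp
qed

lemma pow_ratio_mult: "((x::real) * y) ^ i / (x * y) ^ m = (x ^ i / x ^ m) * (y ^ i / y ^ m)"
  by (simp add: power_mult_distrib)

lemma aux_cancel: "(p::real) \<noteq> 0 \<Longrightarrow> g * (z * w) * y = (p * z * y) * (g * (w / p))"
  by (simp add: field_simps)

lemma core2:
  "1 \<le> l \<Longrightarrow> l + m = n \<Longrightarrow> 1 \<le> i \<Longrightarrow> i \<le> m \<Longrightarrow> length vs = n \<Longrightarrow> distinct vs \<Longrightarrow> ND P q vs \<Longrightarrow>
   altsum (\<lambda>ws. G (take (l - 1) ws) * (zz P q (take l ws) ^ i / zz P q (take l ws) ^ m)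
                   * (\<Prod>j\<in>{Suc l..n}. zz P q (take j ws))) vs = 0"
proof (induction l arbitrary: P q vs G n)
  case 0
  then show ?case by simp
next
  case (Suc l)
  let ?z = "\<lambda>b. q 1 - P b 1"
  have ne: "vs \<noteq> []" using Suc.prems by auto
  obtain n' where n': "n = Suc n'" using Suc.prems by (cases n) auto
  show ?case
  proof (cases "l = 0")
    case True
    define \<phi> where "\<phi> b = G [] * (?z b ^ (i - 1) / (\<Prod>c\<in>set vs - {b}. ?z b - ?z c))" for b
    have "altsum (\<lambda>ws. G (take (Suc l - 1) ws) * (zz P q (take (Suc l) ws) ^ i / zz P q (take (Suc l) ws) ^ m)
                   * (\<Prod>j\<in>{Suc (Suc l)..n}. zz P q (take j ws))) vs = ydet (map P vs @ [q]) * (\<Sum>b\<in>set vs. \<phi> b)"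
    proof (rule altsum_first[OF Suc.prems(6) ne])
      fix b L assume b: "b \<in> set vs" and dL: "distinct L" and sL: "set L = set vs - {b}"
      have lL: "length L = n'" using L_facts[OF b dL sL Suc.prems(6)] Suc.prems(5) n' by simp
      have ndL: "ND (Pr P b) (qr P q b) L" using ND_red[OF Suc.prems(7) b] sL by simp
      have c1: "\<forall>c\<in>set L. P c 1 \<noteq> P b 1" using ND_first[OF Suc.prems(7) b] sL by auto
      have q1: "q 1 \<noteq> P b 1" using ND_q[OF Suc.prems(7) b] .
      have m: "m = n'" using Suc.prems(2) True n' by simp
      have "altsum (\<lambda>ys. G (take (Suc l - 1) (b # ys)) * (zz P q (take (Suc l) (b # ys)) ^ i / zz P q (take (Suc l) (b # ys)) ^ m)
                   * (\<Prod>j\<in>{Suc (Suc l)..n}. zz P q (take j (b # ys)))) L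
          = altsum (\<lambda>ys. (G [] * (?z b ^ i / ?z b ^ m) * ?z b ^ n') * (\<Prod>j\<in>{1..n'}. zz (Pr P b) (qr P q b) (take j ys))) L"
      proof (rule altsum_cong)
        fix ys assume "mset ys = mset L"
        then have ys: "set ys \<subseteq> set vs - {b}" using sL by (metis mset_eq_setD order_refl)
        have zb: "zz P q [b] = ?z b"
          using zz_cons[OF Suc.prems(7) b, of "[]"] by (simp add: zz_Nil)
        have A: "(\<Prod>j\<in>{Suc (Suc l)..n}. zz P q (take j (b # ys)))
            = ?z b ^ (n - Suc l) * (\<Prod>j\<in>{Suc l..<n}. zz (Pr P b) (qr P q b) (take j ys))"
          by (rule prod_zz_shift[OF Suc.prems(7) b ys])
        have B: "n - Suc l = n'" "{Suc l..<n} = {1..n'}" using True n' by auto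
        have e3: "(\<Prod>j\<in>{Suc (Suc l)..n}. zz P q (take j (b # ys)))
            = ?z b ^ n' * (\<Prod>j\<in>{1..n'}. zz (Pr P b) (qr P q b) (take j ys))"
          using A unfolding B .
        have e1: "take (Suc l - 1) (b # ys) = []" using True by simp
        have e2: "take (Suc l) (b # ys) = [b]" using True by simp
        show "G (take (Suc l - 1) (b # ys)) * (zz P q (take (Suc l) (b # ys)) ^ i / zz P q (take (Suc l) (b # ys)) ^ m)
                   * (\<Prod>j\<in>{Suc (Suc l)..n}. zz P q (take j (b # ys)))
            = (G [] * (?z b ^ i / ?z b ^ m) * ?z b ^ n') * (\<Prod>j\<in>{1..n'}. zz (Pr P b) (qr P q b) (take j ys))"
          unfolding e1 e2 e3 zb by (simp only: mult.assoc)
      qed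
      also have "\<dots> = (G [] * (?z b ^ i / ?z b ^ m) * ?z b ^ n') * ydet (map (Pr P b) L @ [qr P q b])"
        by (simp only: altsum_mult core1[OF lL dL ndL])
      also have "\<dots> = ydet (P b # map P L @ [q]) * \<phi> b"
      proof -
        have pr: "prod_list (map (\<lambda>p. p 1 - P b 1) (map P L)) = (\<Prod>c\<in>set vs - {b}. ?z b - ?z c)"
          using dL sL by (simp add: prod.distinct_set_conv_list[symmetric] comp_def)
        have nz: "(\<Prod>c\<in>set vs - {b}. ?z b - ?z c) \<noteq> 0"
          using c1 sL by (auto simp: prod_zero_iff)
        have zm: "?z b ^ m \<noteq> 0" using q1 by simp
        obtain i' where i': "i = Suc i'" using Suc.prems(3) by (cases i) auto
        have zi: "?z b ^ i / ?z b ^ m * ?z b ^ n' = ?z b * ?z b ^ (i - 1)"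
          using zm unfolding m[symmetric] i' by simp
        let ?Yr = "ydet (map (Pr P b) L @ [qr P q b])"
        let ?Pi = "\<Prod>c\<in>set vs - {b}. ?z b - ?z c"
        have "(G [] * (?z b ^ i / ?z b ^ m) * ?z b ^ n') * ?Yr = G [] * (?z b ^ i / ?z b ^ m * ?z b ^ n') * ?Yr"
          by (simp only: mult.assoc)
        also have "\<dots> = G [] * (?z b * ?z b ^ (i - 1)) * ?Yr" by (simp only: zi)
        also have "\<dots> = (?Pi * ?z b * ?Yr) * (G [] * (?z b ^ (i - 1) / ?Pi))"
          by (rule aux_cancel[OF nz])
        finally show ?thesis unfolding ydet_red_Pq[of L P b q, OF c1 q1] pr \<phi>_def .
      qed
      finally show "altsum (\<lambda>ys. G (take (Suc l - 1) (b # ys)) * (zz P q (take (Suc l) (b # ys)) ^ i / zz P q (take (Suc l) (b # ys)) ^ m)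
                   * (\<Prod>j\<in>{Suc (Suc l)..n}. zz P q (take j (b # ys)))) L = ydet (P b # map P L @ [q]) * \<phi> b" .
    qed
    also have "(\<Sum>b\<in>set vs. \<phi> b) = G [] * lag (i - 1) (?z ` set vs)"
      unfolding \<phi>_def by (simp only: sum_distrib_left[symmetric] lag_conv[OF Suc.prems(7)])
    also have "lag (i - 1) (?z ` set vs) = 0"
      using lag_main[of "?z ` set vs" n "i - 1"] card_z[OF Suc.prems(7,6)] Suc.prems True by simp
    finally show ?thesis by simp
  next
    case False
    have "altsum (\<lambda>ws. G (take (Suc l - 1) ws) * (zz P q (take (Suc l) ws) ^ i / zz P q (take (Suc l) ws) ^ m)
                   * (\<Prod>j\<in>{Suc (Suc l)..n}. zz P q (take j ws))) vs = ydet (map P vs @ [q]) * (\<Sum>b\<in>set vs. 0)"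
    proof (rule altsum_first[OF Suc.prems(6) ne])
      fix b L assume b: "b \<in> set vs" and dL: "distinct L" and sL: "set L = set vs - {b}"
      have lL: "length L = n'" using L_facts[OF b dL sL Suc.prems(6)] Suc.prems(5) n' by simp
      have ndL: "ND (Pr P b) (qr P q b) L" using ND_red[OF Suc.prems(7) b] sL by simp
      let ?G = "\<lambda>ws. G (b # ws)"
      let ?c = "(?z b ^ i / ?z b ^ m) * ?z b ^ (n - Suc l)"
      have "altsum (\<lambda>ys. G (take (Suc l - 1) (b # ys)) * (zz P q (take (Suc l) (b # ys)) ^ i / zz P q (take (Suc l) (b # ys)) ^ m)
                   * (\<Prod>j\<in>{Suc (Suc l)..n}. zz P q (take j (b # ys)))) L
          = altsum (\<lambda>ys. ?c * (?G (take (l - 1) ys) * (zz (Pr P b) (qr P q b) (take l ys) ^ i / zz (Pr P b) (qr P q b) (take l ys) ^ m)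
                   * (\<Prod>j\<in>{Suc l..n'}. zz (Pr P b) (qr P q b) (take j ys)))) L"
      proof (rule altsum_cong)
        fix ys assume "mset ys = mset L"
        then have ys: "set ys \<subseteq> set vs - {b}" using sL by (metis mset_eq_setD order_refl)
        have t1: "take (Suc l - 1) (b # ys) = b # take (l - 1) ys" using False by (cases l) auto
        have t2: "zz P q (take (Suc l) (b # ys)) = ?z b * zz (Pr P b) (qr P q b) (take l ys)"
          using zz_cons[OF Suc.prems(7) b, of "take l ys"] ys by (auto dest: in_set_takeD)
        have "(\<Prod>j\<in>{Suc (Suc l)..n}. zz P q (take j (b # ys)))
            = ?z b ^ (n - Suc l) * (\<Prod>j\<in>{Suc l..<n}. zz (Pr P b) (qr P q b) (take j ys))"
          by (rule prod_zz_shift[OF Suc.prems(7) b ys])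
        moreover have "{Suc l..<n} = {Suc l..n'}" using n' by auto
        ultimately show "G (take (Suc l - 1) (b # ys)) * (zz P q (take (Suc l) (b # ys)) ^ i / zz P q (take (Suc l) (b # ys)) ^ m)
                   * (\<Prod>j\<in>{Suc (Suc l)..n}. zz P q (take j (b # ys)))
            = ?c * (?G (take (l - 1) ys) * (zz (Pr P b) (qr P q b) (take l ys) ^ i / zz (Pr P b) (qr P q b) (take l ys) ^ m)
                   * (\<Prod>j\<in>{Suc l..n'}. zz (Pr P b) (qr P q b) (take j ys)))"
          unfolding t1 t2 pow_ratio_mult by (simp add: algebra_simps)
      qed
      also have "\<dots> = ?c * 0"
        unfolding altsum_mult using Suc.IH[where P = "Pr P b" and q = "qr P q b" and vs = L and G = ?G and n = n'] False Suc.prems lL dL ndL n' by simp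
      finally show "altsum (\<lambda>ys. G (take (Suc l - 1) (b # ys)) * (zz P q (take (Suc l) (b # ys)) ^ i / zz P q (take (Suc l) (b # ys)) ^ m)
                   * (\<Prod>j\<in>{Suc (Suc l)..n}. zz P q (take j (b # ys)))) L = ydet (P b # map P L @ [q]) * 0" by simp
    qed
    then show ?thesis by simp
  qed
qed


lemma in_conv_hull_self: "p \<in> S \<Longrightarrow> p \<in> conv_hull S"
  unfolding conv_hull_def
  by (rule CollectI, rule exI[of _ "{p}"], rule exI[of _ "\<lambda>_. 1"]) auto

lemma conv_hull_expand:
  assumes C: "finite C" and a: "a \<in> conv_hull C"
  shows "\<exists>\<mu>. (\<forall>c\<in>C. 0 \<le> \<mu> c) \<and> sum \<mu> C = 1 \<and> a = (\<lambda>j. \<Sum>c\<in>C. \<mu> c * c j)"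
proof -
  obtain F c' where F: "finite F" "F \<subseteq> C" "\<forall>p\<in>F. 0 \<le> c' p" "sum c' F = 1" "a = (\<lambda>j. \<Sum>p\<in>F. c' p * p j)"
    using a unfolding conv_hull_def by blast
  define \<mu> where "\<mu> c = (if c \<in> F then c' c else 0)" for c
  have s: "sum \<mu> C = sum c' F"
    unfolding \<mu>_def using F(2) C by (simp add: sum.If_cases Int_absorb1)
  have t: "(\<Sum>c\<in>C. \<mu> c * c j) = (\<Sum>p\<in>F. c' p * p j)" for j
  proof -
    have "(\<Sum>c\<in>C. \<mu> c * c j) = (\<Sum>c\<in>C. if c \<in> F then c' c * c j else 0)"
      unfolding \<mu>_def by (rule sum.cong) auto
    also have "\<dots> = (\<Sum>p\<in>F. c' p * p j)" using F(2) C by (simp add: sum.If_cases Int_absorb1)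
    finally show ?thesis .
  qed
  show ?thesis
    by (rule exI[of _ \<mu>]) (use F s t in \<open>auto simp: \<mu>_def\<close>)
qed

lemma simplex_ydet:
  fixes \<pi> :: "(nat \<Rightarrow> real) \<Rightarrow> (nat \<Rightarrow> real)" and x :: "nat \<Rightarrow> nat \<Rightarrow> real"
  assumes lin: "\<And>F c. finite F \<Longrightarrow> \<pi> (\<lambda>j. \<Sum>p\<in>F. c p * p j) = (\<lambda>j. \<Sum>p\<in>F. c p * \<pi> p j)"
    and pv: "\<And>i j. i \<in> set us \<Longrightarrow> \<pi> (vertex d x i) j = (if j \<in> {1..k} then x i j else 0)"
    and dus: "distinct us" and lus: "length us = Suc k"
    and simp: "is_simplex k (\<pi> ` conv_hull (vertex d x ` set us))"
  shows "ydet (map x us) \<noteq> 0"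
proof -
  let ?V = "vertex d x ` set us"
  let ?A = "\<pi> ` ?V"
  obtain C where C: "finite C" "card C = Suc k" "aff_independent C" "\<pi> ` conv_hull ?V = conv_hull C"
    using simp unfolding is_simplex_def by auto
  have AinC: "a \<in> conv_hull C" if "a \<in> ?A" for a
    using that in_conv_hull_self[of _ ?V] C(4) by blast
  have CsubA: "C \<subseteq> ?A"
  proof
    fix c assume cC: "c \<in> C"
    then have "c \<in> \<pi> ` conv_hull ?V" using C(4) in_conv_hull_self by blast
    then obtain y where y: "y \<in> conv_hull ?V" "c = \<pi> y" by blast
    obtain F lam where F: "finite F" "F \<subseteq> ?V" "\<forall>p\<in>F. 0 \<le> lam p" "sum lam F = 1" "y = (\<lambda>j. \<Sum>p\<in>F. lam p * p j)"
      using y(1) unfolding conv_hull_def by blast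
    have cF: "c = (\<lambda>j. \<Sum>p\<in>F. lam p * \<pi> p j)" using y(2) F(5) lin[OF F(1)] by simp
    have "\<forall>p\<in>F. \<exists>\<mu>. (\<forall>c\<in>C. 0 \<le> \<mu> c) \<and> sum \<mu> C = 1 \<and> \<pi> p = (\<lambda>j. \<Sum>c\<in>C. \<mu> c * c j)"
      using F(2) AinC conv_hull_expand[OF C(1)] by blast
    then obtain M where M: "\<forall>p\<in>F. (\<forall>c\<in>C. 0 \<le> M p c) \<and> sum (M p) C = 1 \<and> \<pi> p = (\<lambda>j. \<Sum>c\<in>C. M p c * c j)"
      by metis
    define \<nu> where "\<nu> c' = (\<Sum>p\<in>F. lam p * M p c')" for c'
    have cnu: "c j = (\<Sum>c'\<in>C. \<nu> c' * c' j)" for j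
    proof -
      have "c j = (\<Sum>p\<in>F. lam p * (\<Sum>c'\<in>C. M p c' * c' j))"
        using cF M by (simp cong: sum.cong)
      also have "\<dots> = (\<Sum>c'\<in>C. \<nu> c' * c' j)"
        unfolding \<nu>_def by (simp add: sum_distrib_left sum_distrib_right sum.swap[of _ F] mult.assoc)
      finally show ?thesis .
    qed
    have snu: "sum \<nu> C = 1"
    proof -
      have "sum \<nu> C = (\<Sum>p\<in>F. lam p * sum (M p) C)"
        unfolding \<nu>_def by (simp add: sum_distrib_left sum.swap[of _ F])
      also have "\<dots> = sum lam F" using M by simp
      finally show ?thesis using F(4) by simp
    qed
    define \<kappa> where "\<kappa> c' = \<nu> c' - (if c' = c then 1 else 0)" for c'
    have k1: "sum \<kappa> C = 0"
      unfolding \<kappa>_def using snu cC C(1) by (simp add: sum_subtractf)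
    have k2: "(\<Sum>c'\<in>C. \<kappa> c' * c' j) = 0" for j
    proof -
      have "(\<Sum>c'\<in>C. \<kappa> c' * c' j) = (\<Sum>c'\<in>C. \<nu> c' * c' j) - (\<Sum>c'\<in>C. (if c' = c then 1 else 0) * c' j)"
        unfolding \<kappa>_def by (simp add: left_diff_distrib sum_subtractf)
      also have "(\<Sum>c'\<in>C. (if c' = c then 1 else 0) * c' j) = c j"
      proof -
        have "(\<Sum>c'\<in>C. (if c' = c then 1 else 0) * c' j) = (\<Sum>c'\<in>C. if c' = c then c j else 0)"
          by (rule sum.cong) auto
        then show ?thesis using cC C(1) by simp
      qed
      finally show ?thesis using cnu by simp
    qed
    have k0: "\<forall>c'\<in>C. \<kappa> c' = 0" using C(3) k1 k2 unfolding aff_independent_def by blast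
    obtain p0 where p0: "p0 \<in> F" "lam p0 > 0"
    proof (rule ccontr)
      assume "\<not> thesis"
      then have "\<forall>p\<in>F. lam p = 0" using that F(3) by force
      then show False using F(4) by simp
    qed
    have M0: "M p0 c' = 0" if c': "c' \<in> C" "c' \<noteq> c" for c'
    proof -
      have "\<nu> c' = 0" using k0 c' unfolding \<kappa>_def by auto
      then have "\<forall>p\<in>F. lam p * M p c' = 0"
        unfolding \<nu>_def using F(1,3) M c'(1) by (subst (asm) sum_nonneg_eq_0_iff) auto
      then show ?thesis using p0 by auto
    qed
    have pi0: "\<pi> p0 j = M p0 c * c j" for j
    proof -
      have "\<pi> p0 j = (\<Sum>c'\<in>C. M p0 c' * c' j)" using M p0(1) by simp
      also have "\<dots> = (\<Sum>c'\<in>C. if c' = c then M p0 c * c j else 0)"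
        by (rule sum.cong) (auto simp: M0)
      also have "\<dots> = M p0 c * c j" using cC C(1) by simp
      finally show ?thesis .
    qed
    have "sum (M p0) C = M p0 c"
    proof -
      have "sum (M p0) C = (\<Sum>c'\<in>C. if c' = c then M p0 c else 0)"
        by (rule sum.cong) (auto simp: M0)
      then show ?thesis using cC C(1) by simp
    qed
    then have "M p0 c = 1" using M p0(1) by simp
    then have "\<pi> p0 = c" using pi0 by auto
    then show "c \<in> ?A" using p0(1) F(2) by blast
  qed
  have finA: "finite ?A" by simp
  have cardA: "card ?A \<le> Suc k"
    using card_image_le[of ?V \<pi>] card_image_le[of "set us" "vertex d x"] lus
      distinct_card[OF dus] by simp
  have CA: "C = ?A"
    using card_subset_eq[OF finA CsubA] C(2) cardA card_mono[OF finA CsubA] by simp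
  have inj: "inj_on (\<pi> \<circ> vertex d x) (set us)"
  proof (rule eq_card_imp_inj_on)
    show "finite (set us)" by simp
    have "card ((\<pi> \<circ> vertex d x) ` set us) = Suc k" using CA C(2) by (simp add: image_comp)
    then show "card ((\<pi> \<circ> vertex d x) ` set us) = card (set us)" using distinct_card[OF dus] lus by simp
  qed
  define f where "f r = \<pi> (vertex d x (us ! r))" for r
  have injf: "inj_on f {..<Suc k}"
  proof (rule inj_onI)
    fix r s assume r: "r \<in> {..<Suc k}" and s: "s \<in> {..<Suc k}" and e: "f r = f s"
    have "us ! r \<in> set us" "us ! s \<in> set us" using r s lus by auto
    then have "us ! r = us ! s" using inj e unfolding f_def inj_on_def by auto
    then show "r = s" using dus r s lus by (simp add: nth_eq_iff_index_eq)
  qed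
  have Af: "?A = f ` {..<Suc k}"
    unfolding f_def using lus by (auto simp: in_set_conv_nth image_iff) (metis nth_mem)
  have affA: "aff_independent ?A" using C(3) CA by simp
  show ?thesis
  proof
    assume y0: "ydet (map x us) = 0"
    let ?M = "ymat (map x us)"
    have Mc: "?M \<in> carrier_mat (Suc k) (Suc k)" using ymat_carrier[of "map x us"] lus by simp
    have "det (transpose_mat ?M) = 0" using y0 det_transpose[OF Mc] unfolding ydet_def by simp
    then obtain v where v: "v \<in> carrier_vec (Suc k)" "v \<noteq> 0\<^sub>v (Suc k)" "transpose_mat ?M *\<^sub>v v = 0\<^sub>v (Suc k)"
      using det_0_iff_vec_prod_zero_field[of "transpose_mat ?M" "Suc k"] Mc by auto
    have colz: "(\<Sum>r<Suc k. ?M $$ (r, c) * v $ r) = 0" if c: "c < Suc k" for c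
    proof -
      have "(transpose_mat ?M *\<^sub>v v) $ c = 0" using v(3) c by simp
      then show ?thesis using c v(1) Mc
        by (simp add: scalar_prod_def atLeast0LessThan row_def)
    qed
    define \<kappa> where "\<kappa> a = v $ (the_inv_into {..<Suc k} f a)" for a
    have kf: "\<kappa> (f r) = v $ r" if "r < Suc k" for r
      unfolding \<kappa>_def using the_inv_into_f_f[OF injf] that by simp
    have s1: "sum \<kappa> ?A = 0"
    proof -
      have "sum \<kappa> ?A = (\<Sum>r<Suc k. v $ r)"
        unfolding Af by (simp add: sum.reindex[OF injf] kf)
      also have "\<dots> = (\<Sum>r<Suc k. ?M $$ (r, 0) * v $ r)"
        by (rule sum.cong) (use lus in \<open>auto simp: ymat_def\<close>)
      also have "\<dots> = 0" by (rule colz) simp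
      finally show ?thesis .
    qed
    have s2: "(\<Sum>a\<in>?A. \<kappa> a * a j) = 0" for j
    proof -
      have "(\<Sum>a\<in>?A. \<kappa> a * a j) = (\<Sum>r<Suc k. v $ r * f r j)"
        unfolding Af by (simp add: sum.reindex[OF injf] kf)
      also have "\<dots> = (if j \<in> {1..k} then (\<Sum>r<Suc k. ?M $$ (r, j) * v $ r) else 0)"
      proof (cases "j \<in> {1..k}")
        case True
        have "f r j = ?M $$ (r, j)" if "r < Suc k" for r
          unfolding f_def using pv[of "us ! r" j] True that lus by (auto simp: ymat_def)
        then show ?thesis using True by (simp add: mult.commute)
      next
        case False
        have z: "f r j = 0" if "r < Suc k" for r
          unfolding f_def using pv[of "us ! r" j] False that lus by auto
        have "(\<Sum>r<Suc k. v $ r * f r j) = 0" by (rule sum.neutral) (simp add: z)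
        then show ?thesis using False by (simp only: if_False)
      qed
      also have "\<dots> = 0" using colz by auto
      finally show ?thesis .
    qed
    have "\<forall>a\<in>?A. \<kappa> a = 0" using affA s1 s2 unfolding aff_independent_def by blast
    then have "v $ r = 0" if "r < Suc k" for r
      using kf[OF that] Af that by auto
    then have "v = 0\<^sub>v (Suc k)" using v(1) by (intro eq_vecI) auto
    then show False using v(2) by simp
  qed
qed

lemma proj_lin: "finite F \<Longrightarrow> proj_first k (\<lambda>j. \<Sum>p\<in>F. c p * p j) = (\<lambda>j. \<Sum>p\<in>F. c p * proj_first k p j)"
  unfolding proj_first_def by (rule ext) auto

lemma ND_geom:
  fixes x :: "nat \<Rightarrow> nat \<Rightarrow> real"
  assumes simplex: "is_simplex d (conv_hull (vertex d x ` {1..d+1}))"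
    and gp: "general_position d x"
  shows "ND x (x (Suc d)) [1..<Suc d]"
  unfolding ND_def
proof (intro allI impI conjI)
  fix ws assume ws: "distinct ws \<and> set ws \<subseteq> set [1..<Suc d]"
  then have dws: "distinct ws" and sws: "set ws \<subseteq> {1..d}" by auto
  have lws: "length ws \<le> d"
    using card_mono[OF _ sws] distinct_card[OF dws] by simp
  have gp': "is_simplex k (proj_first k ` conv_hull (vertex d x ` U))"
    if "k < d" "U \<subseteq> {1..d+1}" "card U = k + 1" for k U
    using gp that unfolding general_position_def by auto
  show "ydet (map x ws) \<noteq> 0"
  proof (cases ws)
    case Nil then show ?thesis by (simp add: ydet_Nil)
  next
    case (Cons a rest)
    define k where "k = length rest"
    have lk: "length ws = Suc k" unfolding k_def Cons by simp
    have kd: "k < d" using lk lws by simp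
    show ?thesis
    proof (rule simplex_ydet[where \<pi> = "proj_first k" and k = k and d = d])
      show "\<And>F c. finite F \<Longrightarrow> proj_first k (\<lambda>j. \<Sum>p\<in>F. c p * p j) = (\<lambda>j. \<Sum>p\<in>F. c p * proj_first k p j)"
        by (rule proj_lin)
      show "\<And>i j. i \<in> set ws \<Longrightarrow> proj_first k (vertex d x i) j = (if j \<in> {1..k} then x i j else 0)"
        using kd by (auto simp: proj_first_def vertex_def)
      show "is_simplex k (proj_first k ` conv_hull (vertex d x ` set ws))"
        by (rule gp') (use kd sws lk distinct_card[OF dws] in auto)
    qed (use dws lk in auto)
  qed
  have e: "map x ws @ [x (Suc d)] = map x (ws @ [Suc d])" by simp
  have dus: "distinct (ws @ [Suc d])" using dws sws by auto
  have lus: "length (ws @ [Suc d]) = Suc (length ws)" by simp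
  show "ydet (map x ws @ [x (Suc d)]) \<noteq> 0"
    unfolding e
  proof (cases "length ws < d")
    case True
    let ?k = "length ws"
    show "ydet (map x (ws @ [Suc d])) \<noteq> 0"
    proof (rule simplex_ydet[where \<pi> = "proj_first ?k" and k = ?k and d = d])
      show "\<And>F c. finite F \<Longrightarrow> proj_first ?k (\<lambda>j. \<Sum>p\<in>F. c p * p j) = (\<lambda>j. \<Sum>p\<in>F. c p * proj_first ?k p j)"
        by (rule proj_lin)
      show "\<And>i j. i \<in> set (ws @ [Suc d]) \<Longrightarrow> proj_first ?k (vertex d x i) j = (if j \<in> {1..?k} then x i j else 0)"
        using True by (auto simp: proj_first_def vertex_def)
      show "is_simplex ?k (proj_first ?k ` conv_hull (vertex d x ` set (ws @ [Suc d])))"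
        by (rule gp') (use True sws dus distinct_card[OF dus] in auto)
    qed (use dus lus in auto)
  next
    case False
    then have ld: "length ws = d" using lws by simp
    have "set ws = {1..d}"
      using card_subset_eq[OF _ sws] distinct_card[OF dws] ld by simp
    then have su: "set (ws @ [Suc d]) = {1..d+1}" by auto
    show "ydet (map x (ws @ [Suc d])) \<noteq> 0"
    proof (rule simplex_ydet[where \<pi> = id and k = d and d = d])
      show "\<And>F c. finite F \<Longrightarrow> id (\<lambda>j. \<Sum>p\<in>F. c p * p j) = (\<lambda>j. \<Sum>p\<in>F. c p * id p j)"
        by simp
      show "\<And>i j. i \<in> set (ws @ [Suc d]) \<Longrightarrow> id (vertex d x i) j = (if j \<in> {1..d} then x i j else 0)"
        by (auto simp: vertex_def)
      show "is_simplex d (id ` conv_hull (vertex d x ` set (ws @ [Suc d])))"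
        using simplex su by simp
    qed (use dus lus ld in auto)
  qed
qed


definition Expr :: "nat \<Rightarrow> (nat \<Rightarrow> real) \<Rightarrow> nat \<Rightarrow> real" where
  "Expr d w l = poly (nested_sum (map (\<lambda>i. w i / w (i - 1)) [1..<l+1])
                    (monom ((\<Prod>j\<in>{l+1..d}. w j) / w l ^ (d - l)) (d - l))) 1"

definition NN :: "(nat \<Rightarrow> real) \<Rightarrow> nat \<Rightarrow> nat \<Rightarrow> real" where
  "NN w l' k = poly (nested_sum (map (\<lambda>i. w i / w (i - 1)) [1..<Suc l']) (monom 1 k)) 1"

lemma NN_cong: "(\<And>i. i \<le> l' \<Longrightarrow> w1 i = w2 i) \<Longrightarrow> NN w1 l' k = NN w2 l' k"
proof -
  assume h: "\<And>i. i \<le> l' \<Longrightarrow> w1 i = w2 i"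
  have mm: "map (\<lambda>i. w1 i / w1 (i - 1)) [1..<Suc l'] = map (\<lambda>i. w2 i / w2 (i - 1)) [1..<Suc l']"
  proof (rule map_cong[OF refl])
    fix i assume "i \<in> set [1..<Suc l']"
    then have "i \<le> l'" "i - 1 \<le> l'" by auto
    then show "w1 i / w1 (i - 1) = w2 i / w2 (i - 1)" using h by simp
  qed
  show ?thesis unfolding NN_def mm ..
qed

lemma monom_as_smult: "monom (c::real) n = smult c (monom 1 n)"
  by (simp add: smult_monom)

lemma pow_Suc_div: "(x::real) ^ Suc m / x ^ m = x"
  by (cases "x = 0") auto

lemma Expr_step:
  assumes l: "l = Suc l'" and ld: "l \<le> d"
  shows "Expr d w l = Expr d w l' / of_nat (Suc (d - l))
     + (\<Sum>k\<in>{1..d - l}. coeff (Qp (d - l)) k * ((NN w l' k / w l' ^ k) * (w l ^ k / w l ^ (d - l)) * (\<Prod>j\<in>{Suc l..d}. w j)))"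
proof -
  define m where "m = d - l"
  define as' where "as' = map (\<lambda>i. w i / w (i - 1)) [1..<Suc l']"
  define a where "a = w l / w l'"
  define C where "C = (\<Prod>j\<in>{l+1..d}. w j) / w l ^ m"
  define Q where "Q = Qp m"
  have dl': "d - l' = Suc m" unfolding m_def using l ld by simp
  have L1: "map (\<lambda>i. w i / w (i - 1)) [1..<l+1] = as' @ [a]"
    unfolding as'_def a_def l by simp
  have "Expr d w l = poly (nested_sum as' (pcompose (ext_sum (monom C m)) [:0, a:])) 1"
    unfolding Expr_def L1 nested_sum_snoc C_def m_def ..
  also have "ext_sum (monom C m) = smult C Q"
    unfolding Q_def Qp_def by (simp add: ext_sum_smult[symmetric] smult_monom)
  also have "pcompose (smult C Q) [:0, a:] = smult C (\<Sum>k\<le>Suc m. smult (a ^ k * coeff Q k) (monom 1 k))"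
    unfolding pcompose_smult pcompose_lin_expand[OF degree_Qp[of m, folded Q_def]]
    by (simp add: smult_monom)
  also have "poly (nested_sum as' (smult C (\<Sum>k\<le>Suc m. smult (a ^ k * coeff Q k) (monom 1 k)))) 1
      = C * (\<Sum>k\<le>Suc m. a ^ k * coeff Q k * NN w l' k)"
    unfolding nested_sum_smult nested_sum_sum NN_def as'_def[symmetric]
    by (simp add: poly_sum)
  also have "(\<Sum>k\<le>Suc m. a ^ k * coeff Q k * NN w l' k)
      = (\<Sum>k\<in>{1..m}. a ^ k * coeff Q k * NN w l' k) + a ^ Suc m * coeff Q (Suc m) * NN w l' (Suc m)"
  proof -
    have "{..Suc m} = insert 0 (insert (Suc m) {1..m})" by auto
    then show ?thesis using Qp_facts(1)[of m] unfolding Q_def[symmetric] by (simp add: add.commute)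
  qed
  finally have E: "Expr d w l = C * (\<Sum>k\<in>{1..m}. a ^ k * coeff Q k * NN w l' k) + C * a ^ Suc m * (1 / of_nat (Suc m)) * NN w l' (Suc m)"
    using Qp_facts(2)[of m] unfolding Q_def[symmetric] by (simp add: algebra_simps)
  have E': "Expr d w l' = ((\<Prod>j\<in>{l..d}. w j) / w l' ^ Suc m) * NN w l' (Suc m)"
  proof -
    have M: "map (\<lambda>i. w i / w (i - 1)) [1..<l'+1] = as'" unfolding as'_def by simp
    have S: "{l'+1..d} = {l..d}" using l by auto
    show ?thesis unfolding Expr_def dl' NN_def as'_def[symmetric] M S
      by (subst monom_as_smult) (simp only: nested_sum_smult poly_smult)
  qed
  have CA: "C * a ^ Suc m = (\<Prod>j\<in>{l..d}. w j) / w l' ^ Suc m"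
  proof -
    have "(\<Prod>j\<in>{l..d}. w j) = w l * (\<Prod>j\<in>{l+1..d}. w j)"
      using ld by (simp add: prod.atLeast_Suc_atMost)
    moreover have "C * a ^ Suc m = (w l ^ Suc m / w l ^ m) * (\<Prod>j\<in>{l+1..d}. w j) / w l' ^ Suc m"
      unfolding C_def a_def by (simp add: power_divide)
    ultimately show ?thesis by (simp only: pow_Suc_div)
  qed
  have Ck: "C * (a ^ k * coeff Q k * NN w l' k) = coeff Q k * ((NN w l' k / w l' ^ k) * (w l ^ k / w l ^ m) * (\<Prod>j\<in>{Suc l..d}. w j))" for k
    unfolding C_def a_def by (simp add: power_divide mult_ac)
  show ?thesis
    unfolding E E' m_def[symmetric] Q_def[symmetric] sum_distrib_left Ck[symmetric]
    using CA by (simp add: algebra_simps)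
qed

lemma altsum_add: "altsum (\<lambda>ys. F ys + G ys) vs = altsum F vs + altsum G vs"
proof (induction vs arbitrary: F G rule: length_induct)
  case (1 vs)
  show ?case
  proof (cases vs)
    case Nil then show ?thesis by simp
  next
    case (Cons a rest)
    have A: "altsum (\<lambda>ys. F (a # ys) + G (a # ys)) rest = altsum (\<lambda>ys. F (a # ys)) rest + altsum (\<lambda>ys. G (a # ys)) rest"
      using "1.IH" Cons by auto
    have B: "altsum (\<lambda>ys. F (rest ! j # ys) + G (rest ! j # ys)) (rest[j := a])
        = altsum (\<lambda>ys. F (rest ! j # ys)) (rest[j := a]) + altsum (\<lambda>ys. G (rest ! j # ys)) (rest[j := a])" for j
      using "1.IH" Cons by auto
    show ?thesis unfolding Cons altsum.simps A B by (simp add: sum.distrib)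
  qed
qed

lemma altsum_sum: "finite K \<Longrightarrow> altsum (\<lambda>ys. \<Sum>k\<in>K. F k ys) vs = (\<Sum>k\<in>K. altsum (F k) vs)"
proof (induction K rule: finite_induct)
  case empty
  then show ?case using altsum_zero[of vs "\<lambda>ys. 0"] by simp
next
  case (insert k K)
  then show ?case by (simp add: altsum_add)
qed

definition Wz :: "(nat \<Rightarrow> nat \<Rightarrow> real) \<Rightarrow> nat \<Rightarrow> nat list \<Rightarrow> nat \<Rightarrow> real" where
  "Wz x d ws k = zz x (x (Suc d)) (take k ws)"

lemma Wz_take: "i \<le> l' \<Longrightarrow> Wz x d (take l' ws) i = Wz x d ws i"
  unfolding Wz_def by (simp add: min_def)

lemma step_altsum:
  assumes nd: "ND x (x (Suc d)) vs" and dv: "distinct vs" and len: "length vs = d"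
    and l: "l = Suc l'" and ld: "l \<le> d"
  shows "altsum (\<lambda>ws. Expr d (Wz x d ws) l) vs = altsum (\<lambda>ws. Expr d (Wz x d ws) l') vs / of_nat (Suc (d - l))"
proof -
  let ?m = "d - l"
  let ?T = "\<lambda>k ws. (NN (Wz x d ws) l' k / Wz x d ws l' ^ k) * (Wz x d ws l ^ k / Wz x d ws l ^ ?m) * (\<Prod>j\<in>{Suc l..d}. Wz x d ws j)"
  have "altsum (\<lambda>ws. Expr d (Wz x d ws) l) vs
      = altsum (\<lambda>ws. (1 / of_nat (Suc ?m)) * Expr d (Wz x d ws) l' + (\<Sum>k\<in>{1..?m}. coeff (Qp ?m) k * ?T k ws)) vs"
    by (rule altsum_cong) (simp add: Expr_step[OF l ld])
  also have "\<dots> = (1 / of_nat (Suc ?m)) * altsum (\<lambda>ws. Expr d (Wz x d ws) l') vs + (\<Sum>k\<in>{1..?m}. coeff (Qp ?m) k * altsum (?T k) vs)"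
    by (simp only: altsum_add altsum_sum[OF finite_atLeastAtMost] altsum_mult)
  also have "(\<Sum>k\<in>{1..?m}. coeff (Qp ?m) k * altsum (?T k) vs) = 0"
  proof (rule sum.neutral, rule ballI)
    fix k assume k: "k \<in> {1..?m}"
    define G where "G pre = NN (Wz x d pre) l' k / Wz x d pre l' ^ k" for pre
    have "altsum (?T k) vs = altsum (\<lambda>ws. G (take (l - 1) ws) * (zz x (x (Suc d)) (take l ws) ^ k / zz x (x (Suc d)) (take l ws) ^ ?m)
                   * (\<Prod>j\<in>{Suc l..d}. zz x (x (Suc d)) (take j ws))) vs"
    proof (rule altsum_cong)
      fix ws :: "nat list"
      have "NN (Wz x d (take l' ws)) l' k = NN (Wz x d ws) l' k" by (rule NN_cong) (simp add: Wz_take)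
      moreover have "Wz x d (take l' ws) l' = Wz x d ws l'" by (simp add: Wz_take)
      ultimately show "?T k ws = G (take (l - 1) ws) * (zz x (x (Suc d)) (take l ws) ^ k / zz x (x (Suc d)) (take l ws) ^ ?m)
                   * (\<Prod>j\<in>{Suc l..d}. zz x (x (Suc d)) (take j ws))"
        unfolding G_def using l by (simp add: Wz_def)
    qed
    also have "\<dots> = 0"
      by (rule core2) (use k l ld nd dv len in auto)
    finally show "coeff (Qp ?m) k * altsum (?T k) vs = 0" by simp
  qed
  finally show ?thesis by simp
qed

lemma chain_altsum:
  assumes nd: "ND x (x (Suc d)) vs" and dv: "distinct vs" and len: "length vs = d"
  shows "k \<le> d \<Longrightarrow> 1 / fact k * altsum (\<lambda>ws. Expr d (Wz x d ws) (d - k)) vs = altsum (\<lambda>ws. Expr d (Wz x d ws) d) vs"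
proof (induction k)
  case 0 then show ?case by simp
next
  case (Suc k)
  have st: "altsum (\<lambda>ws. Expr d (Wz x d ws) (d - k)) vs = altsum (\<lambda>ws. Expr d (Wz x d ws) (d - Suc k)) vs / of_nat (Suc (d - (d - k)))"
    by (rule step_altsum[OF nd dv len]) (use Suc.prems in auto)
  have dk: "d - (d - k) = k" using Suc.prems by simp
  have "1 / fact (Suc k) * altsum (\<lambda>ws. Expr d (Wz x d ws) (d - Suc k)) vs
      = 1 / fact k * (altsum (\<lambda>ws. Expr d (Wz x d ws) (d - Suc k)) vs / of_nat (Suc k))"
    by (simp add: field_simps)
  also have "\<dots> = 1 / fact k * altsum (\<lambda>ws. Expr d (Wz x d ws) (d - k)) vs"
    using st dk by simp
  also have "\<dots> = altsum (\<lambda>ws. Expr d (Wz x d ws) d) vs" using Suc by simp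
  finally show ?case .
qed

lemma map2_ratio:
  assumes "w 0 = 1"
  shows "map2 (/) (map w [1..<n+1]) (1 # map w [1..<n+1]) = map (\<lambda>i. w i / w (i - 1)) [1..<n+1]"
proof (rule nth_equalityI)
  show "length (map2 (/) (map w [1..<n+1]) (1 # map w [1..<n+1])) = length (map (\<lambda>i. w i / w (i - 1)) [1..<n+1])"
    by simp
next
  fix i assume "i < length (map2 (/) (map w [1..<n+1]) (1 # map w [1..<n+1]))"
  then have i: "i < n" by (simp del: upt_Suc)
  show "map2 (/) (map w [1..<n+1]) (1 # map w [1..<n+1]) ! i = map (\<lambda>i. w i / w (i - 1)) [1..<n+1] ! i"
  proof -
    have a: "map w [1..<n+1] ! i = w (Suc i)" using i by (simp del: upt_Suc)
    have b: "(1 # map w [1..<n+1]) ! i = w i"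
      using i assms by (cases i) (simp_all del: upt_Suc)
    have c: "map (\<lambda>i. w i / w (i - 1)) [1..<n+1] ! i = w (Suc i) / w i" using i by (simp del: upt_Suc)
    have "length (map w [1..<n+1]) = n" "length (1 # map w [1..<n+1]) = Suc n" by (simp_all del: upt_Suc)
    then show ?thesis using i a b c by (simp del: upt_Suc)
  qed
qed

lemma Expr_top: "w 0 = 1 \<Longrightarrow> Expr d w d = g_fun (map w [1..<d+1])"
  unfolding Expr_def g_fun_def f_fun_def map2_ratio by simp

lemma Expr_cong: "(\<And>k. k \<le> d \<Longrightarrow> w1 k = w2 k) \<Longrightarrow> l \<le> d \<Longrightarrow> Expr d w1 l = Expr d w2 l"
proof -
  assume h: "\<And>k. k \<le> d \<Longrightarrow> w1 k = w2 k" and l: "l \<le> d"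
  have mm: "map (\<lambda>i. w1 i / w1 (i - 1)) [1..<l+1] = map (\<lambda>i. w2 i / w2 (i - 1)) [1..<l+1]"
  proof (rule map_cong[OF refl])
    fix i assume "i \<in> set [1..<l+1]"
    then have "i \<le> d" "i - 1 \<le> d" using l by auto
    then show "w1 i / w1 (i - 1) = w2 i / w2 (i - 1)" using h by simp
  qed
  have pp: "(\<Prod>j\<in>{l+1..d}. w1 j) = (\<Prod>j\<in>{l+1..d}. w2 j)" by (rule prod.cong) (auto simp: h)
  show ?thesis unfolding Expr_def mm pp h[OF l] ..
qed

declare upt_Suc[simp del]

lemma zval_Wz:
  assumes k: "k \<le> d"
  shows "zval d x \<sigma> k = Wz x d (map \<sigma> [1..<Suc d]) k"
proof (cases "k = 0")
  case True
  then show ?thesis by (simp add: zval_def Wz_def zz_Nil)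
next
  case False
  define ws where "ws = take k (map \<sigma> [1..<Suc d])"
  have lws: "length ws = k" unfolding ws_def using k by simp
  have wsr: "ws ! r = \<sigma> (Suc r)" if "r < k" for r
    unfolding ws_def using that k by simp
  have X: "Xmat d x \<sigma> k = ymat (map x ws @ [x (Suc d)])"
  proof (rule eq_matI)
    fix r c assume r: "r < dim_row (ymat (map x ws @ [x (Suc d)]))" and c: "c < dim_col (ymat (map x ws @ [x (Suc d)]))"
    then have r': "r < Suc k" and c': "c < Suc k" using lws by (auto simp: ymat_def)
    show "Xmat d x \<sigma> k $$ (r, c) = ymat (map x ws @ [x (Suc d)]) $$ (r, c)"
      using r' c' lws wsr by (auto simp: Xmat_def ymat_def nth_append Let_def)
  qed (use lws in \<open>auto simp: Xmat_def ymat_def\<close>)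
  have Y: "Ymat x \<sigma> k = ymat (map x ws)"
  proof (rule eq_matI)
    fix r c assume r: "r < dim_row (ymat (map x ws))" and c: "c < dim_col (ymat (map x ws))"
    then have r': "r < k" and c': "c < k" using lws by (auto simp: ymat_def)
    show "Ymat x \<sigma> k $$ (r, c) = ymat (map x ws) $$ (r, c)"
      using r' c' lws wsr by (auto simp: Ymat_def ymat_def)
  qed (use lws in \<open>auto simp: Ymat_def ymat_def\<close>)
  show ?thesis using False unfolding zval_def Wz_def zz_def ws_def[symmetric] X Y ydet_def by simp
qed

lemma main_from_ND:
  fixes d l :: nat and x :: "nat \<Rightarrow> nat \<Rightarrow> real"
  assumes nd: "ND x (x (Suc d)) [1..<Suc d]" and l: "l \<le> d"
  shows "(\<Sum>\<sigma> | \<sigma> permutes {1..d}.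
            of_int (sign \<sigma>) * g_fun (map (zval d x \<sigma>) [1..<d+1]))
       = 1 / fact (d - l) *
         (\<Sum>\<sigma> | \<sigma> permutes {1..d}.
            of_int (sign \<sigma>) *
            poly (nested_sum (map (\<lambda>i. zval d x \<sigma> i / zval d x \<sigma> (i - 1)) [1..<l+1])
                    (monom ((\<Prod>j\<in>{l+1..d}. zval d x \<sigma> j) / zval d x \<sigma> l ^ (d - l)) (d - l)))
              1)"
proof -
  let ?vs = "[1..<Suc d]"
  have sv: "set ?vs = {1..d}" by auto
  have dv: "distinct ?vs" and len: "length ?vs = d" by simp_all
  have L: "(\<Sum>\<sigma> | \<sigma> permutes {1..d}. of_int (sign \<sigma>) * g_fun (map (zval d x \<sigma>) [1..<d+1]))
      = altsum (\<lambda>ws. Expr d (Wz x d ws) d) ?vs"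
  proof -
    have "(\<Sum>\<sigma> | \<sigma> permutes {1..d}. of_int (sign \<sigma>) * g_fun (map (zval d x \<sigma>) [1..<d+1]))
        = PS (\<lambda>ws. Expr d (Wz x d ws) d) ?vs"
      unfolding PS_def sv
    proof (rule sum.cong[OF refl])
      fix \<sigma> :: "nat \<Rightarrow> nat"
      have "map (zval d x \<sigma>) [1..<d+1] = map (Wz x d (map \<sigma> ?vs)) [1..<d+1]"
        by (rule map_cong[OF refl]) (simp add: zval_Wz)
      moreover have "Wz x d (map \<sigma> ?vs) 0 = 1" by (simp add: Wz_def zz_Nil)
      ultimately show "of_int (sign \<sigma>) * g_fun (map (zval d x \<sigma>) [1..<d+1]) = of_int (sign \<sigma>) * Expr d (Wz x d (map \<sigma> ?vs)) d"
        by (simp only: Expr_top)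
    qed
    then show ?thesis using PS_altsum[OF dv] by simp
  qed
  have R: "(\<Sum>\<sigma> | \<sigma> permutes {1..d}.
            of_int (sign \<sigma>) *
            poly (nested_sum (map (\<lambda>i. zval d x \<sigma> i / zval d x \<sigma> (i - 1)) [1..<l+1])
                    (monom ((\<Prod>j\<in>{l+1..d}. zval d x \<sigma> j) / zval d x \<sigma> l ^ (d - l)) (d - l)))
              1) = altsum (\<lambda>ws. Expr d (Wz x d ws) l) ?vs"
  proof -
    have "(\<Sum>\<sigma> | \<sigma> permutes {1..d}.
            of_int (sign \<sigma>) *
            poly (nested_sum (map (\<lambda>i. zval d x \<sigma> i / zval d x \<sigma> (i - 1)) [1..<l+1])
                    (monom ((\<Prod>j\<in>{l+1..d}. zval d x \<sigma> j) / zval d x \<sigma> l ^ (d - l)) (d - l)))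
              1) = PS (\<lambda>ws. Expr d (Wz x d ws) l) ?vs"
      unfolding PS_def sv
    proof (rule sum.cong[OF refl])
      fix \<sigma> :: "nat \<Rightarrow> nat"
      have "Expr d (zval d x \<sigma>) l = Expr d (Wz x d (map \<sigma> ?vs)) l"
        by (rule Expr_cong[OF _ l]) (simp add: zval_Wz)
      then show "of_int (sign \<sigma>) *
            poly (nested_sum (map (\<lambda>i. zval d x \<sigma> i / zval d x \<sigma> (i - 1)) [1..<l+1])
                    (monom ((\<Prod>j\<in>{l+1..d}. zval d x \<sigma> j) / zval d x \<sigma> l ^ (d - l)) (d - l)))
              1 = of_int (sign \<sigma>) * Expr d (Wz x d (map \<sigma> ?vs)) l"
        unfolding Expr_def by simp
    qed
    then show ?thesis using PS_altsum[OF dv] by simp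
  qed
  have "1 / fact (d - l) * altsum (\<lambda>ws. Expr d (Wz x d ws) (d - (d - l))) ?vs = altsum (\<lambda>ws. Expr d (Wz x d ws) d) ?vs"
    by (rule chain_altsum[OF nd dv len]) simp
  then show ?thesis unfolding L R using l by simp
qed


theorem mainTheorem15:
  fixes d l :: nat and x :: "nat \<Rightarrow> nat \<Rightarrow> real"
  assumes simplex: "is_simplex d (conv_hull (vertex d x ` {1..d+1}))"
    and gp: "general_position d x"
    and l: "l \<le> d"
  shows "(\<Sum>\<sigma> | \<sigma> permutes {1..d}.
            of_int (sign \<sigma>) * g_fun (map (zval d x \<sigma>) [1..<d+1]))
       = 1 / fact (d - l) *
         (\<Sum>\<sigma> | \<sigma> permutes {1..d}.
            of_int (sign \<sigma>) *
            poly (nested_sum (map (\<lambda>i. zval d x \<sigma> i / zval d x \<sigma> (i - 1)) [1..<l+1])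
                    (monom ((\<Prod>j\<in>{l+1..d}. zval d x \<sigma> j) / zval d x \<sigma> l ^ (d - l)) (d - l)))
              1)"
proof -
  have nd: "ND x (x (Suc d)) [1..<Suc d]" by (rule ND_geom[OF simplex gp])
  show ?thesis by (rule main_from_ND[OF nd l])
qed

end
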